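(* Let $S''=\mathcal{O}[(x_{t,s})_{t\in Z,\,s\in Z^c}]$ be the polynomial ring over $\mathcal{O}$ in the entries of the $l\times 2(n-r)$ matrix $(B_1\,|\,B_2)$, and let $I''\subset S''$ be the ideal generated by the set $\wedge^2(B_1|B_2)$ together with the element $\mathrm{Tr}(B_2J_{n-r}B_1^{t}J_{l})+2\pi$. Then there is an isomorphism of $\mathcal{O}$-algebras $$S/I\;\cong\; S''/I''.$$
   Context: Let $p$ be an odd prime, $F/\mathbb{Q}_p$ a finite extension with uniformizer $\pi$, $\breve F$ the completion of the maximal unramified extension of $F$ (in a fixed algebraic closure), $\mathcal{O}$ the ring of integers of $\breve F$ (so $\pi$ is a uniformizer of $\mathcal{O}$ and $2\in\mathcal{O}^\times$), and $k$ the (algebraically closed) residue field of $\mathcal{O}$. Let $d\ge 5$ and $l$ be integers with $2\le l\le d-2$ and $d\equiv l \pmod 2$; put $n=\lfloor d/2\rfloor$, $r=\lfloor l/2\rfloor$, so $d-l=2(n-r)$. Let $X=(x_{i,j})_{1\le i,j\le d}$ be a $d\times d$ matrix of indeterminates and $S=\mathcal{O}[X]=\mathcal{O}[(x_{i,j})_{1\le i,j\le d}]$. Write $X$ in block form $$X=\begin{pmatrix}E_1&O_1&E_2\\ B_1&A&B_2\\ E_3&O_2&E_4\end{pmatrix}$$ with $E_c$ of size $(n-r)\times(n-r)$, $O_1,O_2$ of size $(n-r)\times l$, $B_1,B_2$ of size $l\times(n-r)$, $A$ of size $l\times l$. Let $Z=\{n-r+1,\dots,d-n+r\}$ (the indices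 of the middle block) and $Z^c=\{1,\dots,d\}\setminus Z$. Let $J_m$ denote the $m\times m$ matrix with $1$'s on the antidiagonal and $0$ elsewhere. Let $S_0$ be the $d\times d$ matrix in the same block form with $J_{n-r}$ in the upper-right and lower-left corner blocks and $0$ elsewhere, and $S_1$ the $d\times d$ matrix with $J_l$ in the middle $l\times l$ block and $0$ elsewhere. Let $\wedge^2X$ denote the set of all $2\times2$ minors of $X$, and $\wedge^2(B_1|B_2)$ the set of elements $x_{i,j}x_{t,s}-x_{i,s}x_{t,j}$ with $i,t\in Z$, $j,s\in Z^c$. Let $I^{\mathrm{naive}}\subset S$ be the ideal generated by the entries of $X^2$, the elements of $\wedge^2X$, the entries of $X^tS_0X-2\pi(S_0X+\pi S_1X)$, and the entries of $X^tS_1X+2(S_0X+\pi S_1X)$. Let $I^{\mathrm{add}}\subset S$ be the ideal generated by $\mathrm{Tr}(X)$, $\mathrm{Tr}(A)+2\pi$, the entries of $AJ_l-J_lA^t$, and the entries of $B_2J_{n-r}B_1^t-AJ_l$. Put $I=I^{\mathrm{naive}}+I^{\mathrm{add}}$. *)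

theory Defs
  imports "HOL-Algebra.Algebra" "HOL-Library.Poly_Mapping"
begin

text \<open>O is modelled as an integral domain which is a complete discrete valuation ring
  of characteristic 0 with a uniformizer, whose residue field O modulo the uniformizer is algebraically
  closed of characteristic p, p an odd prime (so 2 is a unit).\<close>

definition breve_O_like :: "nat \<Rightarrow> 'a::idom \<Rightarrow> bool" where
  "breve_O_like p \<pi>\<^sub>O \<longleftrightarrow>
     Factorial_Ring.prime p \<and> odd p \<and> CHAR('a) = 0 \<and>
     \<pi>\<^sub>O \<noteq> 0 \<and> \<not> \<pi>\<^sub>O dvd 1 \<and>
     (\<forall>x::'a. x \<noteq> 0 \<longrightarrow> (\<exists>u k. u dvd 1 \<and> x = u * \<pi>\<^sub>O ^ k)) \<and>
     \<pi>\<^sub>O dvd of_nat p \<and>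
     (\<forall>(c::nat \<Rightarrow> 'a) m. m \<ge> 1 \<longrightarrow>
        (\<exists>x. \<pi>\<^sub>O dvd (x ^ m + (\<Sum>i<m. c i * x ^ i)))) \<and>
     (\<forall>f::nat \<Rightarrow> 'a. (\<forall>k. \<pi>\<^sub>O ^ k dvd f (Suc k) - f k) \<longrightarrow>
        (\<exists>y. \<forall>k. \<pi>\<^sub>O ^ k dvd y - f k))"

type_synonym 'a mpoly = "((nat \<times> nat) \<Rightarrow>\<^sub>0 nat) \<Rightarrow>\<^sub>0 'a"

definition Var :: "nat \<times> nat \<Rightarrow> 'a::comm_ring_1 mpoly" where
  "Var v = Poly_Mapping.single (Poly_Mapping.single v 1) 1"

definition Const :: "'a::comm_ring_1 \<Rightarrow> 'a mpoly" where
  "Const c = Poly_Mapping.single 0 c"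

definition poly_ring :: "(nat \<times> nat) set \<Rightarrow> ('a::comm_ring_1 mpoly) ring" where
  "poly_ring V = \<lparr> carrier = {p :: 'a mpoly. \<forall>m\<in>Poly_Mapping.keys p. Poly_Mapping.keys m \<subseteq> V},
                   monoid.mult = (*), one = 1, ring.zero = 0, ring.add = (+) \<rparr>"

definition O_alg_iso ::
  "('a::comm_ring_1 mpoly) ring \<Rightarrow> 'a mpoly set \<Rightarrow> ('a mpoly) ring \<Rightarrow> 'a mpoly set
     \<Rightarrow> ('a mpoly set \<Rightarrow> 'a mpoly set) \<Rightarrow> bool" where
  "O_alg_iso R I R' I' h \<longleftrightarrow>
     h \<in> ring_iso (R Quot I) (R' Quot I') \<and>
     (\<forall>c. h (I +>\<^bsub>R\<^esub> Const c) = I' +>\<^bsub>R'\<^esub> Const c)"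

section \<open>Matrices (1-indexed functions)\<close>

definition mmul :: "nat \<Rightarrow> (nat \<Rightarrow> nat \<Rightarrow> 'b::comm_ring_1) \<Rightarrow> (nat \<Rightarrow> nat \<Rightarrow> 'b) \<Rightarrow> nat \<Rightarrow> nat \<Rightarrow> 'b" where
  "mmul k M N i j = (\<Sum>t\<in>{1..k}. M i t * N t j)"

definition mtr :: "(nat \<Rightarrow> nat \<Rightarrow> 'b) \<Rightarrow> nat \<Rightarrow> nat \<Rightarrow> 'b" where
  "mtr M i j = M j i"

definition Jmat :: "nat \<Rightarrow> nat \<Rightarrow> nat \<Rightarrow> 'b::comm_ring_1" where
  "Jmat k i j = (if i + j = k + 1 then 1 else 0)"

definition Xmat :: "nat \<Rightarrow> nat \<Rightarrow> 'a::comm_ring_1 mpoly" where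
  "Xmat i j = Var (i, j)"

text \<open>Middle index set Z and its complement, with m = n - r.\<close>
definition Zset :: "nat \<Rightarrow> nat \<Rightarrow> nat set" where
  "Zset d m = {m + 1 .. d - m}"
definition Zc :: "nat \<Rightarrow> nat \<Rightarrow> nat set" where
  "Zc d m = {1..d} - Zset d m"

text \<open>S0: J_m in the upper right and lower left corner blocks; S1: J_l in the middle block.\<close>
definition S0mat :: "nat \<Rightarrow> nat \<Rightarrow> nat \<Rightarrow> nat \<Rightarrow> 'b::comm_ring_1" where
  "S0mat d m i j = (if i \<in> Zc d m \<and> j \<in> {1..d} \<and> i + j = d + 1 then 1 else 0)"
definition S1mat :: "nat \<Rightarrow> nat \<Rightarrow> nat \<Rightarrow> nat \<Rightarrow> 'b::comm_ring_1" where
  "S1mat d m i j = (if i \<in> Zset d m \<and> i + j = d + 1 then 1 else 0)"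

text \<open>Blocks (indices from 1): A is l x l, B1 and B2 are l x m.\<close>
definition Ablk :: "nat \<Rightarrow> nat \<Rightarrow> nat \<Rightarrow> 'a::comm_ring_1 mpoly" where
  "Ablk m a b = Xmat (m + a) (m + b)"
definition B1blk :: "nat \<Rightarrow> nat \<Rightarrow> nat \<Rightarrow> 'a::comm_ring_1 mpoly" where
  "B1blk m a c = Xmat (m + a) c"
definition B2blk :: "nat \<Rightarrow> nat \<Rightarrow> nat \<Rightarrow> nat \<Rightarrow> 'a::comm_ring_1 mpoly" where
  "B2blk m l a c = Xmat (m + a) (m + l + c)"

definition I_naive_gens :: "nat \<Rightarrow> nat \<Rightarrow> 'a::comm_ring_1 \<Rightarrow> 'a mpoly set" where
  "I_naive_gens d m \<pi>\<^sub>O =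
     {mmul d Xmat Xmat i j | i j. i \<in> {1..d} \<and> j \<in> {1..d}}
   \<union> {Xmat i j * Xmat t s - Xmat i s * Xmat t j | i t j s.
        1 \<le> i \<and> i < t \<and> t \<le> d \<and> 1 \<le> j \<and> j < s \<and> s \<le> d}
   \<union> {mmul d (mmul d (mtr Xmat) (S0mat d m)) Xmat i j
        - 2 * Const \<pi>\<^sub>O * (mmul d (S0mat d m) Xmat i j + Const \<pi>\<^sub>O * mmul d (S1mat d m) Xmat i j)
        | i j. i \<in> {1..d} \<and> j \<in> {1..d}}
   \<union> {mmul d (mmul d (mtr Xmat) (S1mat d m)) Xmat i j
        + 2 * (mmul d (S0mat d m) Xmat i j + Const \<pi>\<^sub>O * mmul d (S1mat d m) Xmat i j)
        | i j. i \<in> {1..d} \<and> j \<in> {1..d}}"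

definition I_add_gens :: "nat \<Rightarrow> nat \<Rightarrow> nat \<Rightarrow> 'a::comm_ring_1 \<Rightarrow> 'a mpoly set" where
  "I_add_gens d m l \<pi>\<^sub>O =
     {(\<Sum>i\<in>{1..d}. Xmat i i)}
   \<union> {(\<Sum>a\<in>{1..l}. Ablk m a a) + 2 * Const \<pi>\<^sub>O}
   \<union> {mmul l (Ablk m) (Jmat l) a b - mmul l (Jmat l) (mtr (Ablk m)) a b
        | a b. a \<in> {1..l} \<and> b \<in> {1..l}}
   \<union> {mmul m (mmul m (B2blk m l) (Jmat m)) (mtr (B1blk m)) a b - mmul l (Ablk m) (Jmat l) a b
        | a b. a \<in> {1..l} \<and> b \<in> {1..l}}"

definition I_dd_gens :: "nat \<Rightarrow> nat \<Rightarrow> nat \<Rightarrow> 'a::comm_ring_1 \<Rightarrow> 'a mpoly set" where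
  "I_dd_gens d m l \<pi>\<^sub>O =
     {Xmat i j * Xmat t s - Xmat i s * Xmat t j | i t j s.
        i \<in> Zset d m \<and> t \<in> Zset d m \<and> j \<in> Zc d m \<and> s \<in> Zc d m}
   \<union> {(\<Sum>a\<in>{1..l}. mmul l (mmul m (mmul m (B2blk m l) (Jmat m)) (mtr (B1blk m))) (Jmat l) a a)
        + 2 * Const \<pi>\<^sub>O}"

end

theory Submission
  imports Defs
begin

section \<open>Substitution\<close>

definition mono :: "((nat\<times>nat) \<Rightarrow> 'a::comm_ring_1 mpoly) \<Rightarrow> ((nat\<times>nat) \<Rightarrow>\<^sub>0 nat) \<Rightarrow> 'a mpoly" where
  "mono \<sigma> k = (\<Prod>v\<in>Poly_Mapping.keys k. \<sigma> v ^ Poly_Mapping.lookup k v)"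

definition subst :: "((nat\<times>nat) \<Rightarrow> 'a::comm_ring_1 mpoly) \<Rightarrow> 'a mpoly \<Rightarrow> 'a mpoly" where
  "subst \<sigma> p = (\<Sum>k\<in>Poly_Mapping.keys p. Const (Poly_Mapping.lookup p k) * mono \<sigma> k)"

lemma mono_superset:
  assumes "finite K" "Poly_Mapping.keys k \<subseteq> K"
  shows "mono \<sigma> k = (\<Prod>v\<in>K. \<sigma> v ^ Poly_Mapping.lookup k v)"
  unfolding mono_def
  by (rule prod.mono_neutral_left) (use assms in \<open>auto simp: in_keys_iff\<close>)

lemma mono_add: "mono \<sigma> (a + b) = mono \<sigma> a * mono \<sigma> b"
proof -
  let ?K = "Poly_Mapping.keys a \<union> Poly_Mapping.keys b"
  have f: "finite ?K" by simp
  have "Poly_Mapping.keys (a+b) \<subseteq> ?K" by (rule keys_add)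
  then have "mono \<sigma> (a+b) = (\<Prod>v\<in>?K. \<sigma> v ^ Poly_Mapping.lookup (a+b) v)"
    by (rule mono_superset[OF f])
  also have "\<dots> = (\<Prod>v\<in>?K. \<sigma> v ^ Poly_Mapping.lookup a v) * (\<Prod>v\<in>?K. \<sigma> v ^ Poly_Mapping.lookup b v)"
    by (simp add: lookup_add power_add prod.distrib)
  also have "\<dots> = mono \<sigma> a * mono \<sigma> b"
    by (simp add: mono_superset[OF f])
  finally show ?thesis .
qed

lemma mono_zero[simp]: "mono \<sigma> 0 = 1"
  by (simp add: mono_def)

lemma Const_0[simp]: "Const 0 = 0" by (simp add: Const_def)
lemma Const_1[simp]: "Const 1 = 1" by (simp add: Const_def)
lemma Const_add: "Const (a + b) = Const a + Const b" by (simp add: Const_def single_add)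
lemma Const_mult: "Const a * Const b = Const (a * b)" by (simp add: Const_def mult_single)
lemma Const_uminus: "Const (- a) = - Const a" by (simp add: Const_def single_uminus)
lemma Const_diff: "Const (a - b) = Const a - Const b" by (simp add: Const_def single_diff)
lemma Const_numeral: "Const (numeral n) = numeral n" by (simp add: Const_def)

lemma subst_superset:
  assumes "finite K" "Poly_Mapping.keys p \<subseteq> K"
  shows "subst \<sigma> p = (\<Sum>k\<in>K. Const (Poly_Mapping.lookup p k) * mono \<sigma> k)"
  unfolding subst_def
  by (rule sum.mono_neutral_left) (use assms in \<open>auto simp: in_keys_iff\<close>)

lemma subst_zero[simp]: "subst \<sigma> 0 = 0" by (simp add: subst_def)

lemma subst_add: "subst \<sigma> (p + q) = subst \<sigma> p + subst \<sigma> q"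
proof -
  let ?K = "Poly_Mapping.keys p \<union> Poly_Mapping.keys q"
  have f: "finite ?K" by simp
  have "subst \<sigma> (p+q) = (\<Sum>k\<in>?K. Const (Poly_Mapping.lookup (p+q) k) * mono \<sigma> k)"
    by (rule subst_superset[OF f keys_add])
  also have "\<dots> = (\<Sum>k\<in>?K. Const (Poly_Mapping.lookup p k) * mono \<sigma> k) + (\<Sum>k\<in>?K. Const (Poly_Mapping.lookup q k) * mono \<sigma> k)"
    by (simp add: lookup_add Const_add distrib_right sum.distrib)
  also have "\<dots> = subst \<sigma> p + subst \<sigma> q"
    by (simp add: subst_superset[OF f])
  finally show ?thesis .
qed

lemma subst_sum: "subst \<sigma> (sum f A) = (\<Sum>x\<in>A. subst \<sigma> (f x))"
  by (induction A rule: infinite_finite_induct) (auto simp: subst_add)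

lemma subst_uminus: "subst \<sigma> (- p) = - subst \<sigma> p"
proof -
  have "subst \<sigma> (- p) + subst \<sigma> p = 0" by (simp flip: subst_add)
  then show ?thesis by (simp add: eq_neg_iff_add_eq_0)
qed

lemma subst_diff: "subst \<sigma> (p - q) = subst \<sigma> p - subst \<sigma> q"
  using subst_add[of \<sigma> p "- q"] by (simp add: subst_uminus)

lemma subst_single: "subst \<sigma> (Poly_Mapping.single k c) = Const c * mono \<sigma> k"
  by (cases "c = 0") (auto simp: subst_def)

lemma poly_expand: "p = (\<Sum>k\<in>Poly_Mapping.keys p. Poly_Mapping.single k (Poly_Mapping.lookup p k))"
proof (rule poly_mapping_eqI)
  fix x
  show "Poly_Mapping.lookup p x = Poly_Mapping.lookup (\<Sum>k\<in>Poly_Mapping.keys p. Poly_Mapping.single k (Poly_Mapping.lookup p k)) x"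
    by (cases "x \<in> Poly_Mapping.keys p")
       (auto simp: lookup_sum lookup_single when_def in_keys_iff)
qed

lemma subst_mult: "subst \<sigma> (p * q) = subst \<sigma> p * subst \<sigma> q"
proof -
  have "p * q = (\<Sum>k\<in>Poly_Mapping.keys p. Poly_Mapping.single k (Poly_Mapping.lookup p k)) *
                (\<Sum>k\<in>Poly_Mapping.keys q. Poly_Mapping.single k (Poly_Mapping.lookup q k))"
    by (simp flip: poly_expand)
  also have "\<dots> = (\<Sum>a\<in>Poly_Mapping.keys p. \<Sum>b\<in>Poly_Mapping.keys q.
       Poly_Mapping.single (a+b) (Poly_Mapping.lookup p a * Poly_Mapping.lookup q b))"
    by (simp add: sum_product mult_single)
  finally have "subst \<sigma> (p*q) = (\<Sum>a\<in>Poly_Mapping.keys p. \<Sum>b\<in>Poly_Mapping.keys q.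
       (Const (Poly_Mapping.lookup p a) * mono \<sigma> a) * (Const (Poly_Mapping.lookup q b) * mono \<sigma> b))"
    by (simp add: subst_sum subst_single mono_add flip: Const_mult; simp add: ac_simps)
  also have "\<dots> = subst \<sigma> p * subst \<sigma> q"
    by (simp add: subst_def sum_product)
  finally show ?thesis .
qed

lemma subst_Const[simp]: "subst \<sigma> (Const c) = Const c"
  by (simp add: Const_def subst_single)

lemma subst_one[simp]: "subst \<sigma> 1 = 1"
  using subst_Const[of \<sigma> 1] by simp

lemma subst_numeral[simp]: "subst \<sigma> (numeral n) = numeral n"
  using subst_Const[of \<sigma> "numeral n"] by (simp add: Const_numeral)

lemma subst_Var[simp]: "subst \<sigma> (Var v) = \<sigma> v"
  by (simp add: Var_def subst_single mono_def)

lemma subst_power: "subst \<sigma> (p ^ n) = subst \<sigma> p ^ n"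
  by (induction n) (auto simp: subst_mult)

lemma subst_prod: "subst \<sigma> (prod f A) = (\<Prod>x\<in>A. subst \<sigma> (f x))"
  by (induction A rule: infinite_finite_induct) (auto simp: subst_mult)

lemmas subst_simps = subst_add subst_diff subst_mult subst_uminus subst_sum subst_power subst_prod


definition carrV :: "(nat\<times>nat) set \<Rightarrow> 'a::comm_ring_1 mpoly set" where
  "carrV V = {p. \<forall>m\<in>Poly_Mapping.keys p. Poly_Mapping.keys m \<subseteq> V}"

lemma carrier_poly_ring[simp]: "carrier (poly_ring V) = carrV V"
  by (simp add: poly_ring_def carrV_def)
lemma poly_ring_simps[simp]:
  "monoid.mult (poly_ring V) = (*)" "one (poly_ring V) = 1" "ring.zero (poly_ring V) = 0" "ring.add (poly_ring V) = (+)"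
  by (simp_all add: poly_ring_def)

lemma carrV_0[simp]: "0 \<in> carrV V" by (simp add: carrV_def)
lemma carrV_1[simp]: "1 \<in> carrV V" by (simp add: carrV_def)
lemma carrV_add[simp,intro]: "p \<in> carrV V \<Longrightarrow> q \<in> carrV V \<Longrightarrow> p + q \<in> carrV V"
proof -
  assume p: "p \<in> carrV V" and q: "q \<in> carrV V"
  show ?thesis unfolding carrV_def
  proof (rule CollectI, rule ballI)
    fix m assume "m \<in> Poly_Mapping.keys (p+q)"
    then have "m \<in> Poly_Mapping.keys p \<or> m \<in> Poly_Mapping.keys q" using keys_add[of p q] by auto
    then show "Poly_Mapping.keys m \<subseteq> V" using p q unfolding carrV_def by auto
  qed
qed
lemma carrV_uminus[simp,intro]: "p \<in> carrV V \<Longrightarrow> - p \<in> carrV V"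
  unfolding carrV_def by (simp add: in_keys_iff)
lemma carrV_diff[simp,intro]: "p \<in> carrV V \<Longrightarrow> q \<in> carrV V \<Longrightarrow> p - q \<in> carrV V"
  using carrV_add[of p V "-q"] by simp
lemma carrV_mult[simp,intro]: "p \<in> carrV V \<Longrightarrow> q \<in> carrV V \<Longrightarrow> p * q \<in> carrV V"
proof -
  assume p: "p \<in> carrV V" and q: "q \<in> carrV V"
  show ?thesis unfolding carrV_def
  proof (rule CollectI, rule ballI)
    fix m assume "m \<in> Poly_Mapping.keys (p*q)"
    then obtain a b where "a \<in> Poly_Mapping.keys p" "b \<in> Poly_Mapping.keys q" "m = a + b"
      using keys_mult by blast
    then show "Poly_Mapping.keys m \<subseteq> V" using p q keys_add[of a b] unfolding carrV_def by blast
  qed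
qed
lemma carrV_sum[simp,intro]: "(\<And>x. x \<in> A \<Longrightarrow> f x \<in> carrV V) \<Longrightarrow> sum f A \<in> carrV V"
  by (induction A rule: infinite_finite_induct) auto
lemma carrV_prod[simp,intro]: "(\<And>x. x \<in> A \<Longrightarrow> f x \<in> carrV V) \<Longrightarrow> prod f A \<in> carrV V"
  by (induction A rule: infinite_finite_induct) auto
lemma carrV_power[simp,intro]: "p \<in> carrV V \<Longrightarrow> p ^ n \<in> carrV V"
  by (induction n) auto
lemma carrV_Const[simp,intro]: "Const c \<in> carrV V" by (simp add: carrV_def Const_def)
lemma carrV_numeral[simp,intro]: "numeral n \<in> carrV V"
  using carrV_Const[of "numeral n" V] by (simp add: Const_numeral)
lemma carrV_Var[simp,intro]: "v \<in> V \<Longrightarrow> Var v \<in> carrV V"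
  by (simp add: carrV_def Var_def)
lemma carrV_mono: "V \<subseteq> W \<Longrightarrow> carrV V \<subseteq> carrV W"
  unfolding carrV_def by blast

lemma cring_poly_ring: "cring (poly_ring V :: 'a::comm_ring_1 mpoly ring)"
  unfolding poly_ring_def
  apply unfold_locales
  apply (auto simp: carrV_def[symmetric] algebra_simps Units_def)
  apply (rule_tac x="-x" in bexI, auto)
  done

lemma ring_poly_ring: "ring (poly_ring V :: 'a::comm_ring_1 mpoly ring)"
  using cring_poly_ring cring.axioms(1) by blast

lemma mono_carrV:
  assumes "Poly_Mapping.keys k \<subseteq> W" "\<And>v. v \<in> W \<Longrightarrow> \<sigma> v \<in> carrV V"
  shows "mono \<sigma> k \<in> carrV V"
  unfolding mono_def using assms by (intro carrV_prod carrV_power) blast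

lemma subst_carrV:
  assumes "p \<in> carrV W" "\<And>v. v \<in> W \<Longrightarrow> \<sigma> v \<in> carrV V"
  shows "subst \<sigma> p \<in> carrV V"
  unfolding subst_def using assms mono_carrV unfolding carrV_def[of W] by (intro carrV_sum carrV_mult) blast+

lemma Var_power: "Var v ^ n = Poly_Mapping.single (Poly_Mapping.single v n) 1"
  by (induction n) (auto simp: Var_def mult_single simp flip: single_add)

lemma mono_cong: "(\<And>v. v \<in> Poly_Mapping.keys k \<Longrightarrow> \<sigma> v = \<tau> v) \<Longrightarrow> mono \<sigma> k = mono \<tau> k"
  unfolding mono_def by simp

lemma prod_single1: "finite A \<Longrightarrow> (\<Prod>v\<in>A. Poly_Mapping.single (f v) (1::'b::comm_semiring_1)) = Poly_Mapping.single (\<Sum>v\<in>A. f v) 1"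
  by (induction A rule: finite_induct) (auto simp: mult_single)

lemma mono_Var: "mono Var k = Poly_Mapping.single k 1"
proof -
  have "mono Var k = (\<Prod>v\<in>Poly_Mapping.keys k. Poly_Mapping.single (Poly_Mapping.single v (Poly_Mapping.lookup k v)) 1)"
    by (simp add: mono_def Var_power)
  also have "\<dots> = Poly_Mapping.single (\<Sum>v\<in>Poly_Mapping.keys k. Poly_Mapping.single v (Poly_Mapping.lookup k v)) 1"
    by (simp add: prod_single1)
  also have "\<dots> = Poly_Mapping.single k 1" by (simp flip: poly_expand)
  finally show ?thesis .
qed

lemma subst_fix:
  assumes "p \<in> carrV W" "\<And>v. v \<in> W \<Longrightarrow> \<sigma> v = Var v"
  shows "subst \<sigma> p = p"
proof -
  have "subst \<sigma> p = (\<Sum>k\<in>Poly_Mapping.keys p. Const (Poly_Mapping.lookup p k) * mono Var k)"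
    unfolding subst_def
    using assms unfolding carrV_def by (intro sum.cong refl arg_cong2[where f="(*)"] mono_cong) blast
  also have "\<dots> = (\<Sum>k\<in>Poly_Mapping.keys p. Poly_Mapping.single k (Poly_Mapping.lookup p k))"
    by (simp add: mono_Var Const_def mult_single)
  also have "\<dots> = p" by (simp flip: poly_expand)
  finally show ?thesis .
qed

section \<open>Type-level ideals\<close>

inductive_set tideal :: "'r::comm_ring_1 set \<Rightarrow> 'r set" for G where
  gen: "g \<in> G \<Longrightarrow> g \<in> tideal G"
| zero: "0 \<in> tideal G"
| add: "a \<in> tideal G \<Longrightarrow> b \<in> tideal G \<Longrightarrow> a + b \<in> tideal G"
| mul: "a \<in> tideal G \<Longrightarrow> r * a \<in> tideal G"

lemma tideal_mulr: "a \<in> tideal G \<Longrightarrow> a * r \<in> tideal G"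
  using tideal.mul[of a G r] by (simp add: mult.commute)
lemma tideal_uminus: "a \<in> tideal G \<Longrightarrow> - a \<in> tideal G"
  using tideal.mul[of a G "-1"] by simp
lemma tideal_diff: "a \<in> tideal G \<Longrightarrow> b \<in> tideal G \<Longrightarrow> a - b \<in> tideal G"
  using tideal.add[of a G "-b"] tideal_uminus by fastforce
lemma tideal_sum: "(\<And>x. x \<in> A \<Longrightarrow> f x \<in> tideal G) \<Longrightarrow> sum f A \<in> tideal G"
  by (induction A rule: infinite_finite_induct) (auto intro: tideal.intros)

lemma tideal_prod_diff:
  "(\<And>x. x \<in> A \<Longrightarrow> f x - g x \<in> tideal G) \<Longrightarrow> prod f A - prod g A \<in> tideal G"
proof (induction A rule: infinite_finite_induct)
  case (insert x F)
  have "prod f (insert x F) - prod g (insert x F) = (f x - g x) * prod f F + g x * (prod f F - prod g F)"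
    using insert by (simp add: algebra_simps)
  then show ?case using insert by (metis insertI1 insertI2 tideal.add tideal.mul tideal_mulr)
qed (auto intro: tideal.intros)

lemma tideal_power_diff:
  "a - b \<in> tideal G \<Longrightarrow> a ^ n - b ^ n \<in> tideal G"
  using tideal_prod_diff[of "{..<n}" "\<lambda>_. a" "\<lambda>_. b" G] by simp

lemma subst_tideal:
  assumes "p \<in> carrV W" "\<And>v. v \<in> W \<Longrightarrow> Var v - \<sigma> v \<in> tideal G"
  shows "p - subst \<sigma> p \<in> tideal G"
proof -
  have "p - subst \<sigma> p = (\<Sum>k\<in>Poly_Mapping.keys p. Const (Poly_Mapping.lookup p k) * (mono Var k - mono \<sigma> k))"
  proof -
    have "subst Var p = p" by (rule subst_fix[OF assms(1)]) auto
    then have "p - subst \<sigma> p = subst Var p - subst \<sigma> p" by simp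
    also have "\<dots> = (\<Sum>k\<in>Poly_Mapping.keys p. Const (Poly_Mapping.lookup p k) * (mono Var k - mono \<sigma> k))"
      by (simp add: subst_def sum_subtractf right_diff_distrib)
    finally show ?thesis .
  qed
  also have "\<dots> \<in> tideal G"
  proof (intro tideal_sum tideal.mul)
    fix k assume k: "k \<in> Poly_Mapping.keys p"
    show "mono Var k - mono \<sigma> k \<in> tideal G"
      unfolding mono_def
      by (intro tideal_prod_diff tideal_power_diff) (use k assms in \<open>auto simp: carrV_def\<close>)
  qed
  finally show ?thesis .
qed

definition proj :: "(nat\<times>nat) set \<Rightarrow> 'a::comm_ring_1 mpoly \<Rightarrow> 'a mpoly" where
  "proj V = subst (\<lambda>v. if v \<in> V then Var v else 0)"

lemma proj_carrV: "proj V p \<in> carrV V"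
  unfolding proj_def by (rule subst_carrV[where W=UNIV]) (auto simp: carrV_def[of UNIV])

lemma proj_fix: "p \<in> carrV V \<Longrightarrow> proj V p = p"
  unfolding proj_def by (rule subst_fix) auto

lemma tideal_Idl:
  assumes G: "G \<subseteq> carrV V" and a: "a \<in> tideal G" and aV: "a \<in> carrV V"
  shows "a \<in> Idl\<^bsub>poly_ring V\<^esub> G"
proof -
  interpret R: ring "poly_ring V" by (rule ring_poly_ring)
  interpret I: ideal "Idl\<^bsub>poly_ring V\<^esub> G" "poly_ring V"
    by (rule R.genideal_ideal) (use G in simp)
  have "proj V a \<in> Idl\<^bsub>poly_ring V\<^esub> G" using a
  proof induction
    case (gen g)
    then show ?case using G R.genideal_self[of G] proj_fix[of g V] by (metis carrier_poly_ring subsetD)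
  next
    case zero
    then show ?case using I.zero_closed by (simp add: proj_def)
  next
    case (add a b)
    then show ?case using I.a_closed[of "proj V a" "proj V b"] by (simp add: proj_def subst_add)
  next
    case (mul a r)
    then show ?case using I.I_l_closed[of "proj V a" "proj V r"] proj_carrV[of V r]
      by (simp add: subst_mult proj_def[symmetric]) (simp add: proj_def subst_mult)
  qed
  then show ?thesis using proj_fix[OF aV] by simp
qed


lemma subst_ring_hom:
  assumes "\<And>v. v \<in> V \<Longrightarrow> \<sigma> v \<in> carrV W"
  shows "subst \<sigma> \<in> ring_hom (poly_ring V) (poly_ring W :: 'a::comm_ring_1 mpoly ring)"
  by (rule ring_hom_memI) (auto simp: subst_add subst_mult intro: subst_carrV assms)

lemma id_ring_hom:
  assumes "W \<subseteq> V"
  shows "id \<in> ring_hom (poly_ring W) (poly_ring V :: 'a::comm_ring_1 mpoly ring)"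
  by (rule ring_hom_memI) (use carrV_mono[OF assms] in auto)

lemma main_iso:
  fixes \<sigma> :: "nat\<times>nat \<Rightarrow> 'a::comm_ring_1 mpoly"
  assumes WV: "W \<subseteq> V"
    and G: "G \<subseteq> carrV V" and G': "G' \<subseteq> carrV W"
    and \<sigma>W: "\<And>v. v \<in> V \<Longrightarrow> \<sigma> v \<in> carrV W"
    and \<sigma>fix: "\<And>v. v \<in> W \<Longrightarrow> \<sigma> v = Var v"
    and A: "\<And>g. g \<in> G \<Longrightarrow> subst \<sigma> g \<in> tideal G'"
    and B: "\<And>g. g \<in> G' \<Longrightarrow> g \<in> tideal G"
    and C: "\<And>v. v \<in> V \<Longrightarrow> Var v - \<sigma> v \<in> tideal G"
  shows "\<exists>h. O_alg_iso (poly_ring V) (Idl\<^bsub>poly_ring V\<^esub> G) (poly_ring W) (Idl\<^bsub>poly_ring W\<^esub> G') h"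
proof -
  let ?R = "poly_ring V :: 'a mpoly ring"
  let ?R' = "poly_ring W :: 'a mpoly ring"
  let ?I = "Idl\<^bsub>?R\<^esub> G"
  let ?I' = "Idl\<^bsub>?R'\<^esub> G'"
  interpret R: cring ?R by (rule cring_poly_ring)
  interpret R': cring ?R' by (rule cring_poly_ring)
  interpret I: ideal ?I ?R by (rule R.genideal_ideal) (use G in simp)
  interpret I': ideal ?I' ?R' by (rule R'.genideal_ideal) (use G' in simp)
  have CWV: "carrV W \<subseteq> carrV V" by (rule carrV_mono[OF WV])
  have \<phi>: "subst \<sigma> \<in> ring_hom ?R ?R'" by (rule subst_ring_hom[OF \<sigma>W])
  interpret \<phi>: ring_hom_ring ?R ?R' "subst \<sigma>" by (rule ring_hom_ringI2[OF R.ring_axioms R'.ring_axioms \<phi>])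
  have \<psi>: "id \<in> ring_hom ?R' ?R" by (rule id_ring_hom[OF WV])
  interpret \<psi>: ring_hom_ring ?R' ?R id by (rule ring_hom_ringI2[OF R'.ring_axioms R.ring_axioms \<psi>])
  have II': "?I \<subseteq> {x \<in> carrier ?R. subst \<sigma> x \<in> ?I'}"
  proof (rule R.genideal_minimal)
    show "ideal {x \<in> carrier ?R. subst \<sigma> x \<in> ?I'} ?R" by (rule \<phi>.ideal_vimage) (rule I'.ideal_axioms)
    show "G \<subseteq> {x \<in> carrier ?R. subst \<sigma> x \<in> ?I'}"
    proof
      fix g assume g: "g \<in> G"
      have "subst \<sigma> g \<in> carrV W" using g G \<sigma>W by (intro subst_carrV) auto
      then show "g \<in> {x \<in> carrier ?R. subst \<sigma> x \<in> ?I'}"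
        using tideal_Idl[OF G' A[OF g]] g G by auto
    qed
  qed
  have I'I: "?I' \<subseteq> {x \<in> carrier ?R'. id x \<in> ?I}"
  proof (rule R'.genideal_minimal)
    show "ideal {x \<in> carrier ?R'. id x \<in> ?I} ?R'" by (rule \<psi>.ideal_vimage) (rule I.ideal_axioms)
    show "G' \<subseteq> {x \<in> carrier ?R'. id x \<in> ?I}"
    proof
      fix g assume g: "g \<in> G'"
      then show "g \<in> {x \<in> carrier ?R'. id x \<in> ?I}"
        using tideal_Idl[OF G B[OF g]] g G' CWV by auto
    qed
  qed
  define \<Phi> where "\<Phi> = (\<lambda>x. ?I' +>\<^bsub>?R'\<^esub> subst \<sigma> x)"
  have \<Phi>hom: "\<Phi> \<in> ring_hom ?R (?R' Quot ?I')"
    unfolding \<Phi>_def using ring_hom_trans[OF \<phi> I'.rcos_ring_hom] by (simp add: comp_def)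
  interpret \<Phi>: ring_hom_ring ?R "?R' Quot ?I'" \<Phi>
    by (rule ring_hom_ringI2[OF R.ring_axioms I'.quotient_is_ring \<Phi>hom])
  have surj: "\<Phi> ` carrier ?R = carrier (?R' Quot ?I')"
  proof
    show "\<Phi> ` carrier ?R \<subseteq> carrier (?R' Quot ?I')"
      using ring_hom_memE(1)[OF \<Phi>hom] by (simp add: image_subset_iff)
    show "carrier (?R' Quot ?I') \<subseteq> \<Phi> ` carrier ?R"
    proof
      fix Q assume "Q \<in> carrier (?R' Quot ?I')"
      then obtain y where y: "y \<in> carrier ?R'" "Q = ?I' +>\<^bsub>?R'\<^esub> y"
        unfolding FactRing_def A_RCOSETS_def RCOSETS_def a_r_coset_def by auto
      have "subst \<sigma> y = y" using y \<sigma>fix by (intro subst_fix[of y W]) auto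
      then have "Q = \<Phi> y" using y unfolding \<Phi>_def by simp
      moreover have "y \<in> carrier ?R" using y CWV by auto
      ultimately show "Q \<in> \<Phi> ` carrier ?R" by blast
    qed
  qed
  have ker: "a_kernel ?R (?R' Quot ?I') \<Phi> = ?I"
  proof
    show "a_kernel ?R (?R' Quot ?I') \<Phi> \<subseteq> ?I"
    proof
      fix x assume "x \<in> a_kernel ?R (?R' Quot ?I') \<Phi>"
      then have x: "x \<in> carrV V" and "\<Phi> x = ?I'"
        unfolding a_kernel_def' by (auto simp: FactRing_def)
      have sx: "subst \<sigma> x \<in> carrV W" using x \<sigma>W by (intro subst_carrV) auto
      then have "subst \<sigma> x \<in> ?I'" using \<open>\<Phi> x = ?I'\<close> I'.rcos_const_imp_mem unfolding \<Phi>_def by auto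
      then have s1: "subst \<sigma> x \<in> ?I" using I'I by auto
      have "x - subst \<sigma> x \<in> tideal G" by (rule subst_tideal[OF x C])
      then have s2: "x - subst \<sigma> x \<in> ?I" using tideal_Idl[OF G] x sx CWV by auto
      have "(x - subst \<sigma> x) + subst \<sigma> x \<in> ?I" using I.a_closed[OF s2 s1] by simp
      then show "x \<in> ?I" by simp
    qed
    show "?I \<subseteq> a_kernel ?R (?R' Quot ?I') \<Phi>"
    proof
      fix x assume x: "x \<in> ?I"
      then have "x \<in> carrier ?R" "subst \<sigma> x \<in> ?I'" using II' by auto
      then show "x \<in> a_kernel ?R (?R' Quot ?I') \<Phi>"
        unfolding a_kernel_def' \<Phi>_def using I'.a_rcos_const by (auto simp: FactRing_def)
    qed
  qed
  define h where "h = (\<lambda>Z0. the_elem (\<Phi> ` Z0))"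
  have iso: "h \<in> ring_iso (?R Quot ?I) (?R' Quot ?I')"
    using \<Phi>.FactRing_iso_set[OF surj] unfolding ker h_def .
  have cst: "h (?I +>\<^bsub>?R\<^esub> Const c) = ?I' +>\<^bsub>?R'\<^esub> Const c" for c
  proof -
    have "h (?I +>\<^bsub>?R\<^esub> Const c) = \<Phi> (Const c)"
      unfolding h_def using \<Phi>.the_elem_simp[of "Const c"] ker by simp
    then show ?thesis unfolding \<Phi>_def by simp
  qed
  show ?thesis unfolding O_alg_iso_def using iso cst by blast
qed


locale ctx =
  fixes d m l :: nat and pi hf :: "'a::comm_ring_1" and G :: "'a mpoly set"
  assumes d_eq: "d = l + 2 * m" and m1: "1 \<le> m" and l1: "1 \<le> l" and hf: "2 * hf = 1"
begin

definition "ZZ = {m+1..m+l}"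
definition "LL = {1..m}"
definition "UU = {m+l+1..l+2*m}"
definition "ZC = LL \<union> UU"
definition rf :: "nat \<Rightarrow> nat" where "rf x = l + 2*m + 1 - x"
definition bv :: "nat \<Rightarrow> nat \<Rightarrow> 'a mpoly" where "bv i j = Var (i, j)"
definition "PP = Const pi"
definition "HH = Const hf"

lemma H2: "2 * HH = 1"
  unfolding HH_def by (metis Const_1 Const_mult Const_numeral hf)

lemma finZ[simp]: "finite ZZ" and finL[simp]: "finite LL" and finU[simp]: "finite UU" and finZc[simp]: "finite ZC"
  by (auto simp: ZZ_def LL_def UU_def ZC_def)

lemma Zc_notZ: "x \<in> ZC \<Longrightarrow> x \<notin> ZZ"
  by (auto simp: ZZ_def ZC_def LL_def UU_def d_eq)
lemma Z_notZc: "x \<in> ZZ \<Longrightarrow> x \<notin> ZC"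
  using Zc_notZ by blast
lemma all_split: "{1..d} = ZZ \<union> ZC"
  by (auto simp: ZZ_def ZC_def LL_def UU_def d_eq)
lemma Zc_alt: "ZC = {1..d} - ZZ"
  by (auto simp: ZZ_def ZC_def LL_def UU_def d_eq)
lemma Z_range: "x \<in> ZZ \<Longrightarrow> 1 \<le> x \<and> x \<le> d" and Zc_range: "x \<in> ZC \<Longrightarrow> 1 \<le> x \<and> x \<le> d"
  by (auto simp: ZZ_def ZC_def LL_def UU_def d_eq)
lemma in_dom_cases: "x \<in> {1..d} \<Longrightarrow> (x \<in> ZZ \<Longrightarrow> R) \<Longrightarrow> (x \<in> ZC \<Longrightarrow> R) \<Longrightarrow> R"
  using all_split by blast

lemma rf_rf: "x \<le> d \<Longrightarrow> rf (rf x) = x"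
  by (simp add: rf_def d_eq)
lemma rfZ: "x \<in> ZZ \<Longrightarrow> rf x \<in> ZZ" and rfL: "x \<in> LL \<Longrightarrow> rf x \<in> UU" and rfU: "x \<in> UU \<Longrightarrow> rf x \<in> LL"
  and rfZc: "x \<in> ZC \<Longrightarrow> rf x \<in> ZC"
  by (auto simp: rf_def ZZ_def ZC_def LL_def UU_def d_eq)
lemma rf_rfZ[simp]: "x \<in> ZZ \<Longrightarrow> rf (rf x) = x" and rf_rfZc[simp]: "x \<in> ZC \<Longrightarrow> rf (rf x) = x"
  and rf_rfU[simp]: "x \<in> UU \<Longrightarrow> rf (rf x) = x" and rf_rfL[simp]: "x \<in> LL \<Longrightarrow> rf (rf x) = x"
  using Z_range Zc_range by (auto simp: rf_rf ZC_def)

lemma inj_rf: "inj_on rf {..d}"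
  by (rule inj_onI) (auto simp: rf_def d_eq)

lemma rf_image: "rf ` ZZ = ZZ" "rf ` ZC = ZC" "rf ` UU = LL" "rf ` LL = UU"
proof -
  show "rf ` ZZ = ZZ" using rfZ by (force intro: image_eqI[of _ rf "rf _"])
  show "rf ` ZC = ZC" using rfZc by (force intro: image_eqI[of _ rf "rf _"])
  show "rf ` UU = LL"
    using rfU rfL by (force intro: image_eqI[of _ rf "rf _"])
  show "rf ` LL = UU"
    using rfU rfL by (force intro: image_eqI[of _ rf "rf _"])
qed

lemma sum_rf_gen: "A \<subseteq> {..d} \<Longrightarrow> (\<Sum>x\<in>A. f (rf x)) = (\<Sum>x\<in>rf ` A. f x)"
  by (subst sum.reindex) (auto intro: inj_on_subset[OF inj_rf])

lemma sumZ_rf: "(\<Sum>x\<in>ZZ. f (rf x)) = (\<Sum>x\<in>ZZ. f x)"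
  using sum_rf_gen[of ZZ f] Z_range rf_image by auto
lemma sumZc_rf: "(\<Sum>x\<in>ZC. f (rf x)) = (\<Sum>x\<in>ZC. f x)"
  using sum_rf_gen[of ZC f] Zc_range rf_image by auto
lemma sumU_rf: "(\<Sum>x\<in>UU. f (rf x)) = (\<Sum>x\<in>LL. f x)"
  using sum_rf_gen[of UU f] rf_image by (auto simp: UU_def d_eq)
lemma sumL_rf: "(\<Sum>x\<in>LL. f (rf x)) = (\<Sum>x\<in>UU. f x)"
  using sum_rf_gen[of LL f] rf_image by (auto simp: LL_def d_eq)

lemma sumZc_split: "(\<Sum>x\<in>ZC. f x) = (\<Sum>x\<in>LL. f x) + (\<Sum>x\<in>UU. f x)"
  unfolding ZC_def by (rule sum.union_disjoint) (auto simp: LL_def UU_def)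
lemma sum_all_split: "(\<Sum>x\<in>{1..d}. f x) = (\<Sum>x\<in>ZZ. f x) + (\<Sum>x\<in>ZC. f x)"
  unfolding all_split by (rule sum.union_disjoint) (auto dest: Zc_notZ)

lemma U_Zc: "x \<in> UU \<Longrightarrow> x \<in> ZC" and L_Zc: "x \<in> LL \<Longrightarrow> x \<in> ZC"
  by (auto simp: ZC_def)

subsection \<open>Congruence\<close>

definition cg :: "'a mpoly \<Rightarrow> 'a mpoly \<Rightarrow> bool" where "cg x y \<longleftrightarrow> x - y \<in> tideal G"

lemma cg_refl[simp]: "cg x x" by (simp add: cg_def tideal.zero)
lemma cg_eq: "x = y \<Longrightarrow> cg x y" by simp
lemma cg_sym: "cg x y \<Longrightarrow> cg y x"
  unfolding cg_def using tideal_uminus[of "x - y" G] by simp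
lemma cg_trans[trans]: "cg x y \<Longrightarrow> cg y z \<Longrightarrow> cg x z"
  unfolding cg_def using tideal.add[of "x - y" G "y - z"] by simp
lemma cg_add: "cg a b \<Longrightarrow> cg c e \<Longrightarrow> cg (a + c) (b + e)"
proof -
  assume "cg a b" "cg c e"
  moreover have "(a + c) - (b + e) = (a - b) + (c - e)" by (simp add: algebra_simps)
  ultimately show ?thesis unfolding cg_def by (metis tideal.add)
qed
lemma cg_uminus: "cg a b \<Longrightarrow> cg (- a) (- b)"
proof -
  assume "cg a b"
  moreover have "- a - - b = - (a - b)" by (simp add: algebra_simps)
  ultimately show ?thesis unfolding cg_def by (metis tideal_uminus)
qed
lemma cg_diff: "cg a b \<Longrightarrow> cg c e \<Longrightarrow> cg (a - c) (b - e)"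
proof -
  assume "cg a b" "cg c e"
  moreover have "(a - c) - (b - e) = (a - b) - (c - e)" by (simp add: algebra_simps)
  ultimately show ?thesis unfolding cg_def by (metis tideal_diff)
qed
lemma cg_multl: "cg a b \<Longrightarrow> cg (c * a) (c * b)"
proof -
  assume "cg a b"
  moreover have "c * a - c * b = c * (a - b)" by (simp add: algebra_simps)
  ultimately show ?thesis unfolding cg_def by (metis tideal.mul)
qed
lemma cg_multr: "cg a b \<Longrightarrow> cg (a * c) (b * c)"
  using cg_multl by (simp add: mult.commute)
lemma cg_mult: "cg a b \<Longrightarrow> cg c e \<Longrightarrow> cg (a * c) (b * e)"
  using cg_multl cg_multr cg_trans by blast
lemma cg_sum: "(\<And>x. x \<in> A \<Longrightarrow> cg (f x) (g x)) \<Longrightarrow> cg (sum f A) (sum g A)"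
  unfolding cg_def by (simp flip: sum_subtractf add: tideal_sum)
lemma cg_0: "cg a 0 \<longleftrightarrow> a \<in> tideal G" by (simp add: cg_def)

end


context ctx begin

definition "Ah s j = (\<Sum>k\<in>UU. bv s k * bv (rf j) (rf k))"
definition "Qm x y = (\<Sum>t\<in>ZZ. bv t x * bv (rf t) y)"
definition "T = (\<Sum>s\<in>ZZ. \<Sum>k\<in>UU. bv s k * bv (rf s) (rf k))"
definition "Yz y j = (if j \<in> ZZ then Ah y j else bv y j)"
definition "Y i j = (if i \<in> ZZ then Yz i j else - (HH * (\<Sum>y\<in>ZZ. bv (rf y) (rf i) * Yz y j)))"
definition "Yt i j = (if i \<in> ZZ then Yz i j else if j \<in> ZZ then PP * bv (rf j) (rf i) else - (HH * Qm (rf i) j))"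

lemma sumZ_swap: "(\<Sum>t\<in>ZZ. f t (rf t)) = (\<Sum>t\<in>ZZ. f (rf t) t)"
proof -
  have "(\<Sum>t\<in>ZZ. f t (rf t)) = (\<Sum>t\<in>ZZ. f (rf t) (rf (rf t)))"
    using sumZ_rf[of "\<lambda>t. f t (rf t)"] by simp
  also have "\<dots> = (\<Sum>t\<in>ZZ. f (rf t) t)" by (rule sum.cong) auto
  finally show ?thesis .
qed

lemma sumZC_swap: "(\<Sum>t\<in>ZC. f t (rf t)) = (\<Sum>t\<in>ZC. f (rf t) t)"
proof -
  have "(\<Sum>t\<in>ZC. f t (rf t)) = (\<Sum>t\<in>ZC. f (rf t) (rf (rf t)))"
    using sumZc_rf[of "\<lambda>t. f t (rf t)"] by simp
  also have "\<dots> = (\<Sum>t\<in>ZC. f (rf t) t)" by (rule sum.cong) auto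
  finally show ?thesis .
qed

lemma sumLU_swap: "(\<Sum>t\<in>LL. f t (rf t)) = (\<Sum>t\<in>UU. f (rf t) t)"
proof -
  have "(\<Sum>t\<in>LL. f t (rf t)) = (\<Sum>t\<in>UU. f (rf t) (rf (rf t)))"
    using sumU_rf[of "\<lambda>t. f t (rf t)"] by simp
  also have "\<dots> = (\<Sum>t\<in>UU. f (rf t) t)" by (rule sum.cong) auto
  finally show ?thesis .
qed

lemma T_swap: "T = (\<Sum>k\<in>UU. \<Sum>s\<in>ZZ. bv s k * bv (rf s) (rf k))"
  unfolding T_def by (rule sum.swap)

lemma T_alt: "T = (\<Sum>s\<in>ZZ. \<Sum>k\<in>UU. bv (rf s) k * bv s (rf k))"
proof -
  have "T = (\<Sum>k\<in>UU. \<Sum>s\<in>ZZ. bv s k * bv (rf s) (rf k))" by (rule T_swap)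
  also have "\<dots> = (\<Sum>k\<in>UU. \<Sum>s\<in>ZZ. bv (rf s) k * bv s (rf k))"
    by (rule sum.cong[OF refl], rule sumZ_swap[where f="\<lambda>s s'. bv s _ * bv s' (rf _)"])
  also have "\<dots> = (\<Sum>s\<in>ZZ. \<Sum>k\<in>UU. bv (rf s) k * bv s (rf k))" by (rule sum.swap)
  finally show ?thesis .
qed

lemma L1: "(\<Sum>x\<in>ZC. \<Sum>t\<in>ZZ. bv t (rf x) * bv (rf t) x) = 2 * T"
proof -
  have U: "(\<Sum>x\<in>UU. \<Sum>t\<in>ZZ. bv t (rf x) * bv (rf t) x) = T"
  proof -
    have "(\<Sum>x\<in>UU. \<Sum>t\<in>ZZ. bv t (rf x) * bv (rf t) x) = (\<Sum>x\<in>UU. \<Sum>t\<in>ZZ. bv (rf t) (rf x) * bv t x)"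
      by (rule sum.cong[OF refl], rule sumZ_swap[where f="\<lambda>t t'. bv t (rf _) * bv t' _"])
    also have "\<dots> = (\<Sum>x\<in>UU. \<Sum>t\<in>ZZ. bv t x * bv (rf t) (rf x))" by (simp add: mult.commute)
    also have "\<dots> = T" by (simp add: T_swap)
    finally show ?thesis .
  qed
  have L: "(\<Sum>x\<in>LL. \<Sum>t\<in>ZZ. bv t (rf x) * bv (rf t) x) = T"
  proof -
    have "(\<Sum>x\<in>LL. \<Sum>t\<in>ZZ. bv t (rf x) * bv (rf t) x) = (\<Sum>x\<in>UU. \<Sum>t\<in>ZZ. bv t x * bv (rf t) (rf x))"
      by (rule sumLU_swap[where f="\<lambda>x x'. \<Sum>t\<in>ZZ. bv t x' * bv (rf t) x"])
    also have "\<dots> = T" by (simp add: T_swap)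
    finally show ?thesis .
  qed
  show ?thesis using U L by (simp add: sumZc_split)
qed

lemma L1': "(\<Sum>x\<in>ZC. \<Sum>t\<in>ZZ. bv t x * bv (rf t) (rf x)) = 2 * T"
  using L1 sumZC_swap[where f="\<lambda>x x'. \<Sum>t\<in>ZZ. bv t x' * bv (rf t) x"] by simp

lemma cg_eq_trans[trans]: "cg a b \<Longrightarrow> b = c \<Longrightarrow> cg a c" by simp
lemma eq_cg_trans[trans]: "a = b \<Longrightarrow> cg b c \<Longrightarrow> cg a c" by simp

lemma cg_rearr: "cg a b \<Longrightarrow> x = a * c \<Longrightarrow> y = b * c \<Longrightarrow> cg x y"
  using cg_multr by blast

end

locale ctx2 = ctx +
  assumes mn: "s \<in> ZZ \<Longrightarrow> t \<in> ZZ \<Longrightarrow> x \<in> ZC \<Longrightarrow> y \<in> ZC \<Longrightarrow> cg (bv s x * bv t y) (bv s y * bv t x)"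
  and trace: "cg T (- (2 * PP))"
begin

lemma L2: assumes "i \<in> ZZ" "j \<in> ZC"
  shows "cg (\<Sum>x\<in>ZC. bv i x * Qm (rf x) j) (2 * T * bv i j)"
proof -
  have "(\<Sum>x\<in>ZC. bv i x * Qm (rf x) j) = (\<Sum>x\<in>ZC. \<Sum>t\<in>ZZ. bv i x * (bv t (rf x) * bv (rf t) j))"
    by (simp add: Qm_def sum_distrib_left)
  also have "cg \<dots> (\<Sum>x\<in>ZC. \<Sum>t\<in>ZZ. bv i j * (bv t (rf x) * bv (rf t) x))"
  proof (intro cg_sum)
    fix x t assume x: "x \<in> ZC" and t: "t \<in> ZZ"
    show "cg (bv i x * (bv t (rf x) * bv (rf t) j)) (bv i j * (bv t (rf x) * bv (rf t) x))"
      by (rule cg_rearr[OF mn[of i "rf t" x j], where c="bv t (rf x)"])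
         (use assms x t rfZ in \<open>simp_all add: ac_simps\<close>)
  qed
  also have "\<dots> = 2 * T * bv i j"
    by (simp add: sum_distrib_left[symmetric] L1 ac_simps)
  finally show ?thesis .
qed

lemma L3: assumes "i \<in> ZZ" "j \<in> ZC"
  shows "cg (\<Sum>x\<in>ZZ. Ah i x * bv x j) (T * bv i j)"
proof -
  have "(\<Sum>x\<in>ZZ. Ah i x * bv x j) = (\<Sum>x\<in>ZZ. \<Sum>k\<in>UU. (bv i k * bv (rf x) (rf k)) * bv x j)"
    by (simp add: Ah_def sum_distrib_right)
  also have "cg \<dots> (\<Sum>x\<in>ZZ. \<Sum>k\<in>UU. bv i j * (bv x k * bv (rf x) (rf k)))"
  proof (intro cg_sum)
    fix x k assume x: "x \<in> ZZ" and k: "k \<in> UU"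
    show "cg ((bv i k * bv (rf x) (rf k)) * bv x j) (bv i j * (bv x k * bv (rf x) (rf k)))"
      by (rule cg_rearr[OF mn[of i x k j], where c="bv (rf x) (rf k)"])
         (use assms x k U_Zc in \<open>simp_all add: ac_simps\<close>)
  qed
  also have "\<dots> = bv i j * T"
    by (simp only: T_def sum_distrib_left)
  also have "\<dots> = T * bv i j" by (simp add: mult.commute)
  finally show ?thesis .
qed

lemma L4: assumes "i \<in> ZZ" "j \<in> ZZ"
  shows "cg (\<Sum>x\<in>ZC. bv i x * bv (rf j) (rf x)) (2 * Ah i j)"
proof -
  have "(\<Sum>x\<in>ZC. bv i x * bv (rf j) (rf x)) = (\<Sum>x\<in>LL. bv i x * bv (rf j) (rf x)) + Ah i j"
    by (simp add: sumZc_split Ah_def)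
  also have "(\<Sum>x\<in>LL. bv i x * bv (rf j) (rf x)) = (\<Sum>k\<in>UU. bv i (rf k) * bv (rf j) k)"
    by (rule sumLU_swap[where f="\<lambda>x x'. bv i x * bv (rf j) x'"])
  also have "cg ((\<Sum>k\<in>UU. bv i (rf k) * bv (rf j) k) + Ah i j) (Ah i j + Ah i j)"
  proof (rule cg_add[OF _ cg_refl])
    show "cg (\<Sum>k\<in>UU. bv i (rf k) * bv (rf j) k) (Ah i j)"
      unfolding Ah_def
      by (rule cg_sum, rule mn) (use assms rfZ rfU L_Zc U_Zc in auto)
  qed
  also have "Ah i j + Ah i j = 2 * Ah i j" by simp
  finally show ?thesis .
qed

lemma L5: assumes "i \<in> ZZ" "j \<in> ZZ"
  shows "cg (\<Sum>x\<in>ZZ. Ah i x * Ah x j) (T * Ah i j)"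
proof -
  have "(\<Sum>x\<in>ZZ. Ah i x * Ah x j) = (\<Sum>x\<in>ZZ. \<Sum>k\<in>UU. \<Sum>k'\<in>UU. (bv i k * bv (rf x) (rf k)) * (bv x k' * bv (rf j) (rf k')))"
    by (simp add: Ah_def sum_product)
  also have "cg \<dots> (\<Sum>x\<in>ZZ. \<Sum>k\<in>UU. \<Sum>k'\<in>UU. (bv x k * bv (rf x) (rf k)) * (bv i k' * bv (rf j) (rf k')))"
  proof (intro cg_sum)
    fix x k k' assume x: "x \<in> ZZ" and k: "k \<in> UU" and k': "k' \<in> UU"
    show "cg ((bv i k * bv (rf x) (rf k)) * (bv x k' * bv (rf j) (rf k'))) ((bv x k * bv (rf x) (rf k)) * (bv i k' * bv (rf j) (rf k')))"
      by (rule cg_rearr[OF mn[of i x k k'], where c="bv (rf x) (rf k) * bv (rf j) (rf k')"])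
         (use assms x k k' U_Zc in \<open>simp_all add: ac_simps\<close>)
  qed
  also have "\<dots> = T * Ah i j"
    by (simp add: sum_distrib_left[symmetric] sum_distrib_right[symmetric] T_def Ah_def)
  finally show ?thesis .
qed

lemma L6: assumes "c \<in> ZC" "j \<in> ZZ"
  shows "cg (\<Sum>y\<in>ZZ. bv (rf y) c * Ah y j) (T * bv (rf j) c)"
proof -
  have "(\<Sum>y\<in>ZZ. bv (rf y) c * Ah y j) = (\<Sum>y\<in>ZZ. \<Sum>k\<in>UU. bv (rf y) c * (bv y k * bv (rf j) (rf k)))"
    by (simp add: Ah_def sum_distrib_left)
  also have "cg \<dots> (\<Sum>y\<in>ZZ. \<Sum>k\<in>UU. bv (rf j) c * (bv y k * bv (rf y) (rf k)))"
  proof (intro cg_sum)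
    fix y k assume y: "y \<in> ZZ" and k: "k \<in> UU"
    show "cg (bv (rf y) c * (bv y k * bv (rf j) (rf k))) (bv (rf j) c * (bv y k * bv (rf y) (rf k)))"
      by (rule cg_rearr[OF mn[of "rf y" "rf j" c "rf k"], where c="bv y k"])
         (use assms y k rfZ rfU L_Zc in \<open>simp_all add: ac_simps\<close>)
  qed
  also have "\<dots> = bv (rf j) c * T"
    by (simp only: T_def sum_distrib_left)
  also have "\<dots> = T * bv (rf j) c" by (simp add: mult.commute)
  finally show ?thesis .
qed

lemma L7: assumes "a \<in> ZC" "j \<in> ZC"
  shows "cg (\<Sum>x\<in>ZC. Qm a x * Qm (rf x) j) (2 * T * Qm a j)"
proof -
  have "(\<Sum>x\<in>ZC. Qm a x * Qm (rf x) j) = (\<Sum>x\<in>ZC. \<Sum>t\<in>ZZ. \<Sum>t'\<in>ZZ. (bv t a * bv (rf t) x) * (bv t' (rf x) * bv (rf t') j))"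
    by (simp add: Qm_def sum_product)
  also have "cg \<dots> (\<Sum>x\<in>ZC. \<Sum>t\<in>ZZ. \<Sum>t'\<in>ZZ. (bv t a * bv (rf t) j) * (bv t' (rf x) * bv (rf t') x))"
  proof (intro cg_sum)
    fix x t t' assume x: "x \<in> ZC" and t: "t \<in> ZZ" and t': "t' \<in> ZZ"
    show "cg ((bv t a * bv (rf t) x) * (bv t' (rf x) * bv (rf t') j)) ((bv t a * bv (rf t) j) * (bv t' (rf x) * bv (rf t') x))"
      by (rule cg_rearr[OF mn[of "rf t" "rf t'" x j], where c="bv t a * bv t' (rf x)"])
         (use assms x t t' rfZ in \<open>simp_all add: ac_simps\<close>)
  qed
  also have "\<dots> = (\<Sum>t\<in>ZZ. \<Sum>x\<in>ZC. \<Sum>t'\<in>ZZ. (bv t a * bv (rf t) j) * (bv t' (rf x) * bv (rf t') x))"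
    by (rule sum.swap)
  also have "\<dots> = Qm a j * (\<Sum>x\<in>ZC. \<Sum>t'\<in>ZZ. bv t' (rf x) * bv (rf t') x)"
    by (simp only: Qm_def sum_distrib_right, simp only: sum_distrib_left)
  also have "\<dots> = 2 * T * Qm a j" by (simp only: L1, simp add: ac_simps)
  finally show ?thesis .
qed

lemma L8: assumes "a \<in> ZC" "j \<in> ZZ"
  shows "cg (\<Sum>x\<in>ZC. Qm a x * bv (rf j) (rf x)) (2 * T * bv (rf j) a)"
proof -
  have "(\<Sum>x\<in>ZC. Qm a x * bv (rf j) (rf x)) = (\<Sum>x\<in>ZC. \<Sum>t\<in>ZZ. (bv t a * bv (rf t) x) * bv (rf j) (rf x))"
    by (simp add: Qm_def sum_distrib_right)
  also have "cg \<dots> (\<Sum>x\<in>ZC. \<Sum>t\<in>ZZ. bv (rf j) a * (bv t (rf x) * bv (rf t) x))"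
  proof (intro cg_sum)
    fix x t assume x: "x \<in> ZC" and t: "t \<in> ZZ"
    show "cg ((bv t a * bv (rf t) x) * bv (rf j) (rf x)) (bv (rf j) a * (bv t (rf x) * bv (rf t) x))"
      by (rule cg_rearr[OF mn[of t "rf j" a "rf x"], where c="bv (rf t) x"])
         (use assms x t rfZ rfZc in \<open>simp_all add: ac_simps\<close>)
  qed
  also have "\<dots> = bv (rf j) a * (\<Sum>x\<in>ZC. \<Sum>t\<in>ZZ. bv t (rf x) * bv (rf t) x)"
    by (simp only: sum_distrib_left)
  also have "\<dots> = 2 * T * bv (rf j) a"
    by (simp only: L1, simp add: ac_simps)
  finally show ?thesis .
qed

lemma L9: assumes "i \<in> ZZ" "j \<in> ZC"
  shows "cg (\<Sum>y\<in>ZZ. Ah (rf y) i * bv y j) (T * bv (rf i) j)"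
proof -
  have "(\<Sum>y\<in>ZZ. Ah (rf y) i * bv y j) = (\<Sum>y\<in>ZZ. \<Sum>k\<in>UU. (bv (rf y) k * bv (rf i) (rf k)) * bv y j)"
    by (simp add: Ah_def sum_distrib_right)
  also have "cg \<dots> (\<Sum>y\<in>ZZ. \<Sum>k\<in>UU. bv (rf i) j * (bv (rf y) k * bv y (rf k)))"
  proof (intro cg_sum)
    fix y k assume y: "y \<in> ZZ" and k: "k \<in> UU"
    show "cg ((bv (rf y) k * bv (rf i) (rf k)) * bv y j) (bv (rf i) j * (bv (rf y) k * bv y (rf k)))"
      by (rule cg_rearr[OF mn[of "rf i" y "rf k" j], where c="bv (rf y) k"])
         (use assms y k rfZ rfU L_Zc in \<open>simp_all add: ac_simps\<close>)
  qed
  also have "\<dots> = bv (rf i) j * T"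
    by (simp only: T_alt sum_distrib_left)
  also have "\<dots> = T * bv (rf i) j" by (simp add: mult.commute)
  finally show ?thesis .
qed

lemma L10: assumes "i \<in> ZZ" "j \<in> ZZ"
  shows "cg (\<Sum>y\<in>ZZ. Ah (rf y) i * Ah y j) (T * Ah (rf i) j)"
proof -
  have "(\<Sum>y\<in>ZZ. Ah (rf y) i * Ah y j) = (\<Sum>y\<in>ZZ. \<Sum>k\<in>UU. \<Sum>k'\<in>UU. (bv (rf y) k * bv (rf i) (rf k)) * (bv y k' * bv (rf j) (rf k')))"
    by (simp add: Ah_def sum_product)
  also have "cg \<dots> (\<Sum>y\<in>ZZ. \<Sum>k\<in>UU. \<Sum>k'\<in>UU. (bv (rf y) k * bv y (rf k)) * (bv (rf i) k' * bv (rf j) (rf k')))"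
  proof (intro cg_sum)
    fix y k k' assume y: "y \<in> ZZ" and k: "k \<in> UU" and k': "k' \<in> UU"
    show "cg ((bv (rf y) k * bv (rf i) (rf k)) * (bv y k' * bv (rf j) (rf k'))) ((bv (rf y) k * bv y (rf k)) * (bv (rf i) k' * bv (rf j) (rf k')))"
      by (rule cg_rearr[OF mn[of "rf i" y "rf k" k'], where c="bv (rf y) k * bv (rf j) (rf k')"])
         (use assms y k k' rfZ rfU L_Zc U_Zc in \<open>simp_all add: ac_simps\<close>)
  qed
  also have "\<dots> = T * Ah (rf i) j"
    by (simp add: sum_distrib_left[symmetric] sum_distrib_right[symmetric] T_alt Ah_def)
  finally show ?thesis .
qed

lemma Yzz: assumes "i \<in> ZC" "j \<in> ZC" shows "Y i j = - (HH * Qm (rf i) j)"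
proof -
  have "(\<Sum>y\<in>ZZ. bv (rf y) (rf i) * bv y j) = (\<Sum>y\<in>ZZ. bv y (rf i) * bv (rf y) j)"
    by (rule sumZ_swap[where f="\<lambda>y y'. bv y' (rf i) * bv y j"])
  then show ?thesis using assms Zc_notZ by (simp add: Y_def Yz_def Qm_def)
qed

lemma HH2: "HH * (2 * x) = x"
  using H2 by (metis mult.assoc mult.commute mult_1)

lemma Yzc: assumes "i \<in> ZC" "j \<in> ZZ" shows "cg (Y i j) (PP * bv (rf j) (rf i))"
proof -
  have "Y i j = - (HH * (\<Sum>y\<in>ZZ. bv (rf y) (rf i) * Ah y j))"
    using assms Zc_notZ by (simp add: Y_def Yz_def)
  also have "cg \<dots> (- (HH * (T * bv (rf j) (rf i))))"
    by (intro cg_uminus cg_multl L6) (use assms rfZc in auto)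
  also have "cg \<dots> (- (HH * ((- (2 * PP)) * bv (rf j) (rf i))))"
    by (intro cg_uminus cg_multl cg_multr trace)
  also have "\<dots> = PP * bv (rf j) (rf i)"
    using HH2[of "PP * bv (rf j) (rf i)"] by (simp add: ac_simps)
  finally show ?thesis .
qed

lemma Y_Yt: assumes "i \<in> {1..d}" "j \<in> {1..d}" shows "cg (Y i j) (Yt i j)"
proof (cases "i \<in> ZZ")
  case True then show ?thesis by (simp add: Y_def Yt_def)
next
  case False
  then have i: "i \<in> ZC" using assms all_split by blast
  show ?thesis
  proof (cases "j \<in> ZZ")
    case True then show ?thesis using Yzc[OF i True] False by (simp add: Yt_def)
  next
    case False
    then have "j \<in> ZC" using assms all_split by blast
    then show ?thesis using Yzz[OF i] False \<open>i \<notin> ZZ\<close> by (simp add: Yt_def)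
  qed
qed

end


context ctx2 begin

lemma trace': "cg (x * T) (x * (- (2 * PP)))"
  by (rule cg_multl[OF trace])

lemma G1: assumes i: "i \<in> {1..d}" and j: "j \<in> {1..d}"
  shows "cg (\<Sum>x\<in>{1..d}. Yt i x * Yt x j) 0"
proof -
  note nz = Zc_notZ
  have split: "(\<Sum>x\<in>{1..d}. Yt i x * Yt x j) = (\<Sum>x\<in>ZZ. Yt i x * Yt x j) + (\<Sum>x\<in>ZC. Yt i x * Yt x j)"
    by (rule sum_all_split)
  consider "i \<in> ZZ" "j \<in> ZZ" | "i \<in> ZZ" "j \<in> ZC" | "i \<in> ZC" "j \<in> ZZ" | "i \<in> ZC" "j \<in> ZC"
    using i j all_split by blast
  then show ?thesis
  proof cases
    case 1
    have "(\<Sum>x\<in>{1..d}. Yt i x * Yt x j) = (\<Sum>x\<in>ZZ. Ah i x * Ah x j) + PP * (\<Sum>x\<in>ZC. bv i x * bv (rf j) (rf x))"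
      unfolding split using 1 nz by (simp add: Yt_def Yz_def sum_distrib_left ac_simps cong: sum.cong)
    also have "cg \<dots> (T * Ah i j + PP * (2 * Ah i j))"
      by (intro cg_add cg_multl L5 L4) (use 1 in auto)
    also have "cg \<dots> ((- (2 * PP)) * Ah i j + PP * (2 * Ah i j))"
      by (intro cg_add cg_multr trace cg_refl)
    also have "\<dots> = 0" by (simp add: algebra_simps)
    finally show ?thesis .
  next
    case 2
    have "(\<Sum>x\<in>{1..d}. Yt i x * Yt x j) = (\<Sum>x\<in>ZZ. Ah i x * bv x j) - HH * (\<Sum>x\<in>ZC. bv i x * Qm (rf x) j)"
      unfolding split using 2 nz rfZc by (simp add: Yt_def Yz_def sum_distrib_left sum_negf ac_simps cong: sum.cong)
    also have "cg \<dots> (T * bv i j - HH * (2 * T * bv i j))"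
      by (intro cg_diff cg_multl L3 L2) (use 2 in auto)
    also have "\<dots> = 0" using HH2[of "T * bv i j"] by (simp add: ac_simps)
    finally show ?thesis .
  next
    case 3
    have "(\<Sum>x\<in>{1..d}. Yt i x * Yt x j) = PP * (\<Sum>x\<in>ZZ. bv (rf x) (rf i) * Ah x j) - HH * (PP * (\<Sum>x\<in>ZC. Qm (rf i) x * bv (rf j) (rf x)))"
      unfolding split using 3 nz rfZc by (simp add: Yt_def Yz_def sum_distrib_left sum_negf ac_simps cong: sum.cong)
    also have "cg \<dots> (PP * (T * bv (rf j) (rf i)) - HH * (PP * (2 * T * bv (rf j) (rf i))))"
      by (intro cg_diff cg_multl L6 L8) (use 3 rfZc in auto)
    also have "\<dots> = 0" using HH2[of "PP * T * bv (rf j) (rf i)"] by (simp add: ac_simps)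
    finally show ?thesis .
  next
    case 4
    have "(\<Sum>x\<in>{1..d}. Yt i x * Yt x j) = PP * (\<Sum>x\<in>ZZ. bv (rf x) (rf i) * bv x j) + HH * (HH * (\<Sum>x\<in>ZC. Qm (rf i) x * Qm (rf x) j))"
      unfolding split using 4 nz rfZc by (simp add: Yt_def Yz_def sum_distrib_left ac_simps cong: sum.cong)
    also have "(\<Sum>x\<in>ZZ. bv (rf x) (rf i) * bv x j) = Qm (rf i) j"
      unfolding Qm_def by (rule sumZ_swap[where f="\<lambda>y y'. bv y' (rf i) * bv y j"])
    also have "cg (PP * Qm (rf i) j + HH * (HH * (\<Sum>x\<in>ZC. Qm (rf i) x * Qm (rf x) j)))
                  (PP * Qm (rf i) j + HH * (HH * (2 * T * Qm (rf i) j)))"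
      by (intro cg_add cg_multl L7 cg_refl) (use 4 rfZc in auto)
    also have "cg \<dots> (PP * Qm (rf i) j + HH * (HH * (2 * (- (2 * PP)) * Qm (rf i) j)))"
      by (intro cg_add cg_multl cg_multr trace cg_refl)
    also have "\<dots> = 0"
    proof -
      have "HH * (HH * (2 * (- (2 * PP)) * Qm (rf i) j)) = - (HH * (2 * (HH * (2 * (PP * Qm (rf i) j)))))"
        by (simp add: ac_simps)
      also have "\<dots> = - (PP * Qm (rf i) j)" by (simp add: HH2)
      finally show ?thesis by simp
    qed
    finally show ?thesis .
  qed
qed

end


context ctx2 begin

lemma K2: assumes "i \<in> ZZ" "t \<in> ZZ" "j \<in> ZZ" "s \<in> ZC"
  shows "cg (Ah i j * bv t s) (bv i s * Ah t j)"
proof -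
  have "Ah i j * bv t s = (\<Sum>k\<in>UU. (bv i k * bv (rf j) (rf k)) * bv t s)"
    by (simp add: Ah_def sum_distrib_right)
  also have "cg \<dots> (\<Sum>k\<in>UU. bv i s * (bv t k * bv (rf j) (rf k)))"
  proof (rule cg_sum)
    fix k assume k: "k \<in> UU"
    show "cg ((bv i k * bv (rf j) (rf k)) * bv t s) (bv i s * (bv t k * bv (rf j) (rf k)))"
      by (rule cg_rearr[OF mn[of i t k s], where c="bv (rf j) (rf k)"])
         (use assms k U_Zc in \<open>simp_all add: ac_simps\<close>)
  qed
  also have "\<dots> = bv i s * Ah t j" by (simp add: Ah_def sum_distrib_left)
  finally show ?thesis .
qed

lemma K3: assumes "i \<in> ZZ" "t \<in> ZZ" "j \<in> ZZ" "s \<in> ZZ"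
  shows "cg (Ah i j * Ah t s) (Ah i s * Ah t j)"
proof -
  have "Ah i j * Ah t s = (\<Sum>k\<in>UU. \<Sum>k'\<in>UU. (bv i k * bv (rf j) (rf k)) * (bv t k' * bv (rf s) (rf k')))"
    by (simp add: Ah_def sum_product)
  also have "cg \<dots> (\<Sum>k\<in>UU. \<Sum>k'\<in>UU. (bv i k * bv (rf s) (rf k)) * (bv t k' * bv (rf j) (rf k')))"
  proof (intro cg_sum)
    fix k k' assume k: "k \<in> UU" and k': "k' \<in> UU"
    show "cg ((bv i k * bv (rf j) (rf k)) * (bv t k' * bv (rf s) (rf k'))) ((bv i k * bv (rf s) (rf k)) * (bv t k' * bv (rf j) (rf k')))"
      by (rule cg_rearr[OF mn[of "rf j" "rf s" "rf k" "rf k'"], where c="bv i k * bv t k'"])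
         (use assms k k' rfZ rfU L_Zc in \<open>simp_all add: ac_simps\<close>)
  qed
  also have "\<dots> = Ah i s * Ah t j" by (simp add: Ah_def sum_product)
  finally show ?thesis .
qed

lemma K4: assumes "i \<in> ZZ" "a \<in> ZC" "j \<in> ZC" "s \<in> ZC"
  shows "cg (bv i j * Qm a s) (bv i s * Qm a j)"
proof -
  have "bv i j * Qm a s = (\<Sum>u\<in>ZZ. bv i j * (bv u a * bv (rf u) s))"
    by (simp add: Qm_def sum_distrib_left)
  also have "cg \<dots> (\<Sum>u\<in>ZZ. bv i s * (bv u a * bv (rf u) j))"
  proof (rule cg_sum)
    fix u assume u: "u \<in> ZZ"
    show "cg (bv i j * (bv u a * bv (rf u) s)) (bv i s * (bv u a * bv (rf u) j))"
      by (rule cg_rearr[OF mn[of i "rf u" j s], where c="bv u a"])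
         (use assms u rfZ in \<open>simp_all add: ac_simps\<close>)
  qed
  also have "\<dots> = bv i s * Qm a j" by (simp add: Qm_def sum_distrib_left)
  finally show ?thesis .
qed

lemma K5: assumes "i \<in> ZZ" "j \<in> ZZ" "a \<in> ZC" "s \<in> ZC"
  shows "cg (Ah i j * Qm a s) (T * (bv i s * bv (rf j) a))"
proof -
  have "Ah i j * Qm a s = (\<Sum>k\<in>UU. \<Sum>u\<in>ZZ. (bv i k * bv (rf j) (rf k)) * (bv u a * bv (rf u) s))"
    by (simp add: Ah_def Qm_def sum_product)
  also have "cg \<dots> (\<Sum>k\<in>UU. \<Sum>u\<in>ZZ. (bv i s * bv (rf j) a) * (bv (rf u) k * bv u (rf k)))"
  proof (intro cg_sum)
    fix k u assume k: "k \<in> UU" and u: "u \<in> ZZ"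
    have "cg ((bv i k * bv (rf j) (rf k)) * (bv u a * bv (rf u) s)) ((bv i s * bv (rf u) k) * (bv (rf j) (rf k) * bv u a))"
      by (rule cg_rearr[OF mn[of i "rf u" k s], where c="bv (rf j) (rf k) * bv u a"])
         (use assms k u rfZ U_Zc in \<open>simp_all add: ac_simps\<close>)
    also have "cg \<dots> ((bv i s * bv (rf j) a) * (bv (rf u) k * bv u (rf k)))"
      by (rule cg_rearr[OF mn[of "rf j" u "rf k" a], where c="bv i s * bv (rf u) k"])
         (use assms k u rfZ rfU L_Zc in \<open>simp_all add: ac_simps\<close>)
    finally show "cg ((bv i k * bv (rf j) (rf k)) * (bv u a * bv (rf u) s)) ((bv i s * bv (rf j) a) * (bv (rf u) k * bv u (rf k)))" .
  qed
  also have "\<dots> = (bv i s * bv (rf j) a) * (\<Sum>k\<in>UU. \<Sum>u\<in>ZZ. bv (rf u) k * bv u (rf k))"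
    by (simp only: sum_distrib_left)
  also have "(\<Sum>k\<in>UU. \<Sum>u\<in>ZZ. bv (rf u) k * bv u (rf k)) = T"
    by (simp only: T_alt, rule sum.swap)
  also have "(bv i s * bv (rf j) a) * T = T * (bv i s * bv (rf j) a)" by (simp add: mult.commute)
  finally show ?thesis .
qed

lemma K6: assumes "i \<in> ZZ" "j \<in> ZZ" "s \<in> ZZ" "a \<in> ZC"
  shows "cg (Ah i j * bv (rf s) a) (Ah i s * bv (rf j) a)"
proof -
  have "Ah i j * bv (rf s) a = (\<Sum>k\<in>UU. (bv i k * bv (rf j) (rf k)) * bv (rf s) a)"
    by (simp add: Ah_def sum_distrib_right)
  also have "cg \<dots> (\<Sum>k\<in>UU. (bv i k * bv (rf s) (rf k)) * bv (rf j) a)"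
  proof (rule cg_sum)
    fix k assume k: "k \<in> UU"
    show "cg ((bv i k * bv (rf j) (rf k)) * bv (rf s) a) ((bv i k * bv (rf s) (rf k)) * bv (rf j) a)"
      by (rule cg_rearr[OF mn[of "rf j" "rf s" "rf k" a], where c="bv i k"])
         (use assms k rfZ rfU L_Zc in \<open>simp_all add: ac_simps\<close>)
  qed
  also have "\<dots> = Ah i s * bv (rf j) a" by (simp add: Ah_def sum_distrib_right)
  finally show ?thesis .
qed

lemma K7: assumes "a \<in> ZC" "a' \<in> ZC" "j \<in> ZC" "s \<in> ZC"
  shows "cg (Qm a j * Qm a' s) (Qm a s * Qm a' j)"
proof -
  have "Qm a j * Qm a' s = (\<Sum>u\<in>ZZ. \<Sum>u'\<in>ZZ. (bv u a * bv (rf u) j) * (bv u' a' * bv (rf u') s))"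
    by (simp add: Qm_def sum_product)
  also have "cg \<dots> (\<Sum>u\<in>ZZ. \<Sum>u'\<in>ZZ. (bv u a * bv (rf u) s) * (bv u' a' * bv (rf u') j))"
  proof (intro cg_sum)
    fix u u' assume u: "u \<in> ZZ" and u': "u' \<in> ZZ"
    show "cg ((bv u a * bv (rf u) j) * (bv u' a' * bv (rf u') s)) ((bv u a * bv (rf u) s) * (bv u' a' * bv (rf u') j))"
      by (rule cg_rearr[OF mn[of "rf u" "rf u'" j s], where c="bv u a * bv u' a'"])
         (use assms u u' rfZ in \<open>simp_all add: ac_simps\<close>)
  qed
  also have "\<dots> = Qm a s * Qm a' j" by (simp add: Qm_def sum_product)
  finally show ?thesis .
qed

lemma K8: assumes "j \<in> ZZ" "a \<in> ZC" "a' \<in> ZC" "s \<in> ZC"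
  shows "cg (bv (rf j) a * Qm a' s) (bv (rf j) a' * Qm a s)"
proof -
  have "bv (rf j) a * Qm a' s = (\<Sum>u\<in>ZZ. bv (rf j) a * (bv u a' * bv (rf u) s))"
    by (simp add: Qm_def sum_distrib_left)
  also have "cg \<dots> (\<Sum>u\<in>ZZ. bv (rf j) a' * (bv u a * bv (rf u) s))"
  proof (rule cg_sum)
    fix u assume u: "u \<in> ZZ"
    show "cg (bv (rf j) a * (bv u a' * bv (rf u) s)) (bv (rf j) a' * (bv u a * bv (rf u) s))"
      by (rule cg_rearr[OF mn[of "rf j" u a a'], where c="bv (rf u) s"])
         (use assms u rfZ in \<open>simp_all add: ac_simps\<close>)
  qed
  also have "\<dots> = bv (rf j) a' * Qm a s" by (simp add: Qm_def sum_distrib_left)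
  finally show ?thesis .
qed

lemma Yt_ZZ_ZZ: "i \<in> ZZ \<Longrightarrow> j \<in> ZZ \<Longrightarrow> Yt i j = Ah i j"
  and Yt_ZZ_ZC: "i \<in> ZZ \<Longrightarrow> j \<in> ZC \<Longrightarrow> Yt i j = bv i j"
  and Yt_ZC_ZZ: "i \<in> ZC \<Longrightarrow> j \<in> ZZ \<Longrightarrow> Yt i j = PP * bv (rf j) (rf i)"
  and Yt_ZC_ZC: "i \<in> ZC \<Longrightarrow> j \<in> ZC \<Longrightarrow> Yt i j = - (HH * Qm (rf i) j)"
  using Zc_notZ by (auto simp: Yt_def Yz_def)

lemmas Yt_simps = Yt_ZZ_ZZ Yt_ZZ_ZC Yt_ZC_ZZ Yt_ZC_ZC

lemma cg_scale: "cg a b \<Longrightarrow> x = c * a \<Longrightarrow> y = c * b \<Longrightarrow> cg x y"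
  using cg_multl by blast

lemma G2c: assumes "i \<in> {1..d}" "t \<in> {1..d}" "j \<in> {1..d}" "s \<in> {1..d}"
  and ci: "i \<in> ZZ \<or> t \<in> ZC" and cj: "j \<in> ZZ \<or> s \<in> ZC"
  shows "cg (Yt i j * Yt t s) (Yt i s * Yt t j)"
proof -
  have dom: "x \<in> {1..d} \<Longrightarrow> x \<in> ZZ \<or> x \<in> ZC" for x using all_split by blast
  have a: "i \<in> ZZ \<Longrightarrow> t \<in> ZZ \<Longrightarrow> j \<in> ZZ \<Longrightarrow> s \<in> ZZ \<Longrightarrow> ?thesis"
    by (simp add: Yt_simps K3)
  have b: "i \<in> ZZ \<Longrightarrow> t \<in> ZZ \<Longrightarrow> j \<in> ZZ \<Longrightarrow> s \<in> ZC \<Longrightarrow> ?thesis"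
    by (simp add: Yt_simps K2)
  have c: "i \<in> ZZ \<Longrightarrow> t \<in> ZZ \<Longrightarrow> j \<in> ZC \<Longrightarrow> s \<in> ZC \<Longrightarrow> ?thesis"
    by (simp add: Yt_simps mn)
  have dd: "i \<in> ZZ \<Longrightarrow> t \<in> ZC \<Longrightarrow> j \<in> ZZ \<Longrightarrow> s \<in> ZZ \<Longrightarrow> ?thesis"
    by (simp add: Yt_simps, rule cg_scale[OF K6[of i j s "rf t"], where c=PP]) (simp_all add: rfZc ac_simps)
  have e: "i \<in> ZZ \<Longrightarrow> t \<in> ZC \<Longrightarrow> j \<in> ZZ \<Longrightarrow> s \<in> ZC \<Longrightarrow> ?thesis"
  proof -
    assume h: "i \<in> ZZ" "t \<in> ZC" "j \<in> ZZ" "s \<in> ZC"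
    have "Yt i j * Yt t s = - (HH * (Ah i j * Qm (rf t) s))" using h by (simp add: Yt_simps)
    also have "cg \<dots> (- (HH * (T * (bv i s * bv (rf j) (rf t)))))"
      by (intro cg_uminus cg_multl K5) (use h rfZc in auto)
    also have "cg \<dots> (- (HH * ((- (2 * PP)) * (bv i s * bv (rf j) (rf t)))))"
      by (intro cg_uminus cg_multl cg_multr trace)
    also have "\<dots> = PP * (bv i s * bv (rf j) (rf t))"
      using HH2[of "PP * (bv i s * bv (rf j) (rf t))"] by (simp add: ac_simps)
    also have "\<dots> = Yt i s * Yt t j" using h by (simp add: Yt_simps ac_simps)
    finally show ?thesis .
  qed
  have f: "i \<in> ZZ \<Longrightarrow> t \<in> ZC \<Longrightarrow> j \<in> ZC \<Longrightarrow> s \<in> ZC \<Longrightarrow> ?thesis"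
    by (simp add: Yt_simps, rule cg_scale[OF K4[of i "rf t" j s], where c="- HH"]) (simp_all add: rfZc ac_simps)
  have g: "i \<in> ZC \<Longrightarrow> t \<in> ZC \<Longrightarrow> j \<in> ZZ \<Longrightarrow> s \<in> ZZ \<Longrightarrow> ?thesis"
    by (simp add: Yt_simps, rule cg_scale[OF mn[of "rf j" "rf s" "rf i" "rf t"], where c="PP * PP"])
       (simp_all add: rfZc rfZ ac_simps)
  have h: "i \<in> ZC \<Longrightarrow> t \<in> ZC \<Longrightarrow> j \<in> ZZ \<Longrightarrow> s \<in> ZC \<Longrightarrow> ?thesis"
    by (simp add: Yt_simps, rule cg_scale[OF K8[of j "rf i" "rf t" s], where c="- (PP * HH)"])
       (simp_all add: rfZc ac_simps)
  have k: "i \<in> ZC \<Longrightarrow> t \<in> ZC \<Longrightarrow> j \<in> ZC \<Longrightarrow> s \<in> ZC \<Longrightarrow> ?thesis"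
    by (simp add: Yt_simps, rule cg_scale[OF K7[of "rf i" "rf t" j s], where c="HH * HH"])
       (simp_all add: rfZc ac_simps)
  show ?thesis
    using dom[OF assms(1)] dom[OF assms(2)] dom[OF assms(3)] dom[OF assms(4)] ci cj a b c dd e f g h k
    by blast
qed

lemma G2: assumes "i \<in> {1..d}" "t \<in> {1..d}" "j \<in> {1..d}" "s \<in> {1..d}"
  shows "cg (Yt i j * Yt t s) (Yt i s * Yt t j)"
proof -
  have dom: "x \<in> {1..d} \<Longrightarrow> x \<in> ZZ \<or> x \<in> ZC" for x using all_split by blast
  have sw1: "cg (Yt i j * Yt t s) (Yt i s * Yt t j)" if "cg (Yt t j * Yt i s) (Yt t s * Yt i j)" for i t j s
    using cg_sym[OF that] by (simp add: ac_simps)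
  have sw2: "cg (Yt i j * Yt t s) (Yt i s * Yt t j)" if "cg (Yt i s * Yt t j) (Yt i j * Yt t s)" for i t j s
    using cg_sym[OF that] .
  have "i \<in> ZZ \<or> t \<in> ZC \<or> (i \<in> ZC \<and> t \<in> ZZ)" using dom[OF assms(1)] dom[OF assms(2)] by blast
  moreover have "j \<in> ZZ \<or> s \<in> ZC \<or> (j \<in> ZC \<and> s \<in> ZZ)" using dom[OF assms(3)] dom[OF assms(4)] by blast
  ultimately show ?thesis
  proof (elim disjE conjE)
  qed (use G2c[OF assms] G2c[of t i j s] G2c[of i t s j] G2c[of t i s j] assms sw1 sw2 Z_notZc in \<open>meson\<close>)+
qed

end


context ctx begin
lemma Qm_sym: "Qm x y = Qm y x"
proof -
  have "Qm x y = (\<Sum>t\<in>ZZ. bv (rf t) x * bv t y)"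
    unfolding Qm_def by (rule sumZ_swap[where f="\<lambda>t t'. bv t x * bv t' y"])
  then show ?thesis by (simp add: Qm_def mult.commute)
qed
end

context ctx2 begin

lemma G3: assumes i: "i \<in> {1..d}" and j: "j \<in> {1..d}"
  shows "cg ((\<Sum>y\<in>ZC. Yt (rf y) i * Yt y j)
      - 2 * PP * ((if i \<in> ZC then Yt (rf i) j else 0) + PP * (if i \<in> ZZ then Yt (rf i) j else 0))) 0"
proof -
  note nz = Zc_notZ Z_notZc
  consider "i \<in> ZZ" "j \<in> ZZ" | "i \<in> ZZ" "j \<in> ZC" | "i \<in> ZC" "j \<in> ZZ" | "i \<in> ZC" "j \<in> ZC"
    using i j all_split by blast
  then show ?thesis
  proof cases
    case 1
    have "(\<Sum>y\<in>ZC. Yt (rf y) i * Yt y j) = PP * (PP * (\<Sum>y\<in>ZC. bv (rf i) y * bv (rf j) (rf y)))"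
      using 1 rfZc by (simp add: Yt_simps sum_distrib_left ac_simps cong: sum.cong)
    moreover have "(if i \<in> ZC then Yt (rf i) j else 0) + PP * (if i \<in> ZZ then Yt (rf i) j else 0) = PP * Ah (rf i) j"
      using 1 rfZ nz by (simp add: Yt_simps)
    ultimately have "(\<Sum>y\<in>ZC. Yt (rf y) i * Yt y j)
      - 2 * PP * ((if i \<in> ZC then Yt (rf i) j else 0) + PP * (if i \<in> ZZ then Yt (rf i) j else 0))
      = PP * (PP * (\<Sum>y\<in>ZC. bv (rf i) y * bv (rf j) (rf y))) - 2 * PP * (PP * Ah (rf i) j)" by simp
    also have "cg \<dots> (PP * (PP * (2 * Ah (rf i) j)) - 2 * PP * (PP * Ah (rf i) j))"
      by (intro cg_diff cg_multl L4 cg_refl) (use 1 rfZ in auto)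
    also have "\<dots> = 0" by (simp add: algebra_simps)
    finally show ?thesis .
  next
    case 2
    have "(\<Sum>y\<in>ZC. Yt (rf y) i * Yt y j) = - (PP * (HH * (\<Sum>y\<in>ZC. bv (rf i) y * Qm (rf y) j)))"
      using 2 rfZc by (simp add: Yt_simps sum_distrib_left sum_negf ac_simps cong: sum.cong)
    moreover have "(if i \<in> ZC then Yt (rf i) j else 0) + PP * (if i \<in> ZZ then Yt (rf i) j else 0) = PP * bv (rf i) j"
      using 2 rfZ nz by (simp add: Yt_simps)
    ultimately have "(\<Sum>y\<in>ZC. Yt (rf y) i * Yt y j)
      - 2 * PP * ((if i \<in> ZC then Yt (rf i) j else 0) + PP * (if i \<in> ZZ then Yt (rf i) j else 0))
      = - (PP * (HH * (\<Sum>y\<in>ZC. bv (rf i) y * Qm (rf y) j))) - 2 * PP * (PP * bv (rf i) j)" by simp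
    also have "cg \<dots> (- (PP * (HH * (2 * T * bv (rf i) j))) - 2 * PP * (PP * bv (rf i) j))"
      by (intro cg_diff cg_uminus cg_multl L2 cg_refl) (use 2 rfZ in auto)
    also have "cg \<dots> (- (PP * (HH * (2 * (- (2 * PP)) * bv (rf i) j))) - 2 * PP * (PP * bv (rf i) j))"
      by (intro cg_diff cg_uminus cg_multl cg_multr cg_refl trace)
    also have "\<dots> = 0"
    proof -
      have "PP * (HH * (2 * (- (2 * PP)) * bv (rf i) j)) = - (PP * (HH * (2 * (2 * PP * bv (rf i) j))))"
        by (simp add: ac_simps)
      also have "\<dots> = - (PP * (2 * PP * bv (rf i) j))" by (simp only: HH2)
      finally show ?thesis by (simp add: algebra_simps)
    qed
    finally show ?thesis .
  next
    case 3
    have "(\<Sum>y\<in>ZC. Yt (rf y) i * Yt y j) = - (HH * (PP * (\<Sum>y\<in>ZC. Qm i y * bv (rf j) (rf y))))"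
      using 3 rfZc by (simp add: Yt_simps sum_distrib_left sum_negf ac_simps Qm_sym[of _ i] cong: sum.cong)
    moreover have "(if i \<in> ZC then Yt (rf i) j else 0) + PP * (if i \<in> ZZ then Yt (rf i) j else 0) = PP * bv (rf j) i"
      using 3 rfZc nz by (simp add: Yt_simps)
    ultimately have "(\<Sum>y\<in>ZC. Yt (rf y) i * Yt y j)
      - 2 * PP * ((if i \<in> ZC then Yt (rf i) j else 0) + PP * (if i \<in> ZZ then Yt (rf i) j else 0))
      = - (HH * (PP * (\<Sum>y\<in>ZC. Qm i y * bv (rf j) (rf y)))) - 2 * PP * (PP * bv (rf j) i)" by simp
    also have "cg \<dots> (- (HH * (PP * (2 * T * bv (rf j) i))) - 2 * PP * (PP * bv (rf j) i))"
      by (intro cg_diff cg_uminus cg_multl L8 cg_refl) (use 3 in auto)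
    also have "cg \<dots> (- (HH * (PP * (2 * (- (2 * PP)) * bv (rf j) i))) - 2 * PP * (PP * bv (rf j) i))"
      by (intro cg_diff cg_uminus cg_multl cg_multr cg_refl trace)
    also have "\<dots> = 0"
    proof -
      have "HH * (PP * (2 * (- (2 * PP)) * bv (rf j) i)) = - (HH * (2 * (2 * PP * PP * bv (rf j) i)))"
        by (simp add: ac_simps)
      also have "\<dots> = - (2 * PP * PP * bv (rf j) i)" by (simp only: HH2)
      finally show ?thesis by (simp add: algebra_simps)
    qed
    finally show ?thesis .
  next
    case 4
    have "(\<Sum>y\<in>ZC. Yt (rf y) i * Yt y j) = HH * (HH * (\<Sum>y\<in>ZC. Qm i y * Qm (rf y) j))"
      using 4 rfZc by (simp add: Yt_simps sum_distrib_left ac_simps Qm_sym[of _ i] cong: sum.cong)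
    moreover have "(if i \<in> ZC then Yt (rf i) j else 0) + PP * (if i \<in> ZZ then Yt (rf i) j else 0) = - (HH * Qm i j)"
      using 4 rfZc nz by (simp add: Yt_simps)
    ultimately have "(\<Sum>y\<in>ZC. Yt (rf y) i * Yt y j)
      - 2 * PP * ((if i \<in> ZC then Yt (rf i) j else 0) + PP * (if i \<in> ZZ then Yt (rf i) j else 0))
      = HH * (HH * (\<Sum>y\<in>ZC. Qm i y * Qm (rf y) j)) - 2 * PP * (- (HH * Qm i j))" by simp
    also have "cg \<dots> (HH * (HH * (2 * T * Qm i j)) - 2 * PP * (- (HH * Qm i j)))"
      by (intro cg_diff cg_multl L7 cg_refl) (use 4 in auto)
    also have "cg \<dots> (HH * (HH * (2 * (- (2 * PP)) * Qm i j)) - 2 * PP * (- (HH * Qm i j)))"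
      by (intro cg_diff cg_multl cg_multr cg_refl trace)
    also have "\<dots> = 0"
    proof -
      have "HH * (HH * (2 * (- (2 * PP)) * Qm i j)) = - (HH * (2 * (HH * (2 * (PP * Qm i j)))))"
        by (simp add: ac_simps)
      also have "\<dots> = - (PP * Qm i j)" by (simp only: HH2)
      moreover have "2 * PP * (- (HH * Qm i j)) = - (HH * (2 * (PP * Qm i j)))" by (simp add: ac_simps)
      ultimately show ?thesis by (simp only: HH2) simp
    qed
    finally show ?thesis .
  qed
qed

lemma G4: assumes i: "i \<in> {1..d}" and j: "j \<in> {1..d}"
  shows "cg ((\<Sum>y\<in>ZZ. Y (rf y) i * Y y j)
      + 2 * ((if i \<in> ZC then Y (rf i) j else 0) + PP * (if i \<in> ZZ then Y (rf i) j else 0))) 0"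
proof -
  note nz = Zc_notZ Z_notZc
  consider "i \<in> ZC" | "i \<in> ZZ" "j \<in> ZZ" | "i \<in> ZZ" "j \<in> ZC"
    using i j all_split by blast
  then show ?thesis
  proof cases
    case 1
    have s1: "(\<Sum>y\<in>ZZ. Y (rf y) i * Y y j) = (\<Sum>y\<in>ZZ. bv (rf y) i * Yz y j)"
      using 1 rfZ nz by (simp add: Y_def Yz_def cong: sum.cong)
    have s2: "Y (rf i) j = - (HH * (\<Sum>y\<in>ZZ. bv (rf y) i * Yz y j))"
      using 1 rfZc nz by (simp add: Y_def)
    have "(\<Sum>y\<in>ZZ. bv (rf y) i * Yz y j) + 2 * (- (HH * (\<Sum>y\<in>ZZ. bv (rf y) i * Yz y j))) = 0"
      using HH2[of "\<Sum>y\<in>ZZ. bv (rf y) i * Yz y j"] by (simp add: ac_simps)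
    then show ?thesis using 1 nz by (simp add: s1 s2)
  next
    case 2
    have "(\<Sum>y\<in>ZZ. Y (rf y) i * Y y j)
      + 2 * ((if i \<in> ZC then Y (rf i) j else 0) + PP * (if i \<in> ZZ then Y (rf i) j else 0))
      = (\<Sum>y\<in>ZZ. Ah (rf y) i * Ah y j) + 2 * (PP * Ah (rf i) j)"
      using 2 rfZ nz by (simp add: Y_def Yz_def cong: sum.cong)
    also have "cg \<dots> (T * Ah (rf i) j + 2 * (PP * Ah (rf i) j))"
      by (intro cg_add L10 cg_refl) (use 2 in auto)
    also have "cg \<dots> ((- (2 * PP)) * Ah (rf i) j + 2 * (PP * Ah (rf i) j))"
      by (intro cg_add cg_multr trace cg_refl)
    also have "\<dots> = 0" by (simp add: algebra_simps)
    finally show ?thesis .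
  next
    case 3
    have "(\<Sum>y\<in>ZZ. Y (rf y) i * Y y j)
      + 2 * ((if i \<in> ZC then Y (rf i) j else 0) + PP * (if i \<in> ZZ then Y (rf i) j else 0))
      = (\<Sum>y\<in>ZZ. Ah (rf y) i * bv y j) + 2 * (PP * bv (rf i) j)"
      using 3 rfZ nz by (simp add: Y_def Yz_def cong: sum.cong)
    also have "cg \<dots> (T * bv (rf i) j + 2 * (PP * bv (rf i) j))"
      by (intro cg_add L9 cg_refl) (use 3 in auto)
    also have "cg \<dots> ((- (2 * PP)) * bv (rf i) j + 2 * (PP * bv (rf i) j))"
      by (intro cg_add cg_multr trace cg_refl)
    also have "\<dots> = 0" by (simp add: algebra_simps)
    finally show ?thesis .
  qed
qed

lemma sumA: "(\<Sum>s\<in>ZZ. Y s s) = T"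
  by (simp add: Y_def Yz_def T_def Ah_def)

lemma G5a: "cg (\<Sum>i\<in>{1..d}. Y i i) 0"
proof -
  have "(\<Sum>i\<in>ZC. Y i i) = (\<Sum>i\<in>ZC. - (HH * Qm (rf i) i))"
    by (rule sum.cong) (auto simp: Yzz)
  also have "\<dots> = - (HH * (\<Sum>i\<in>ZC. \<Sum>t\<in>ZZ. bv t (rf i) * bv (rf t) i))"
    by (simp add: Qm_def sum_distrib_left sum_negf)
  also have "\<dots> = - (HH * (2 * T))" by (simp only: L1)
  also have "\<dots> = - T" by (simp only: HH2)
  finally have zc: "(\<Sum>i\<in>ZC. Y i i) = - T" .
  have "(\<Sum>i\<in>{1..d}. Y i i) = 0" unfolding sum_all_split by (simp add: zc sumA)
  then show ?thesis by simp
qed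

lemma G5b: "cg ((\<Sum>s\<in>ZZ. Y s s) + 2 * PP) 0"
proof -
  have "cg (T + 2 * PP) ((- (2 * PP)) + 2 * PP)" by (intro cg_add trace cg_refl)
  then show ?thesis by (simp add: sumA)
qed

lemma G5c: assumes "s \<in> ZZ" "t \<in> ZZ" shows "cg (Y s (rf t)) (Y t (rf s))"
proof -
  have "Y s (rf t) = (\<Sum>k\<in>UU. bv s k * bv t (rf k))"
    using assms rfZ by (simp add: Y_def Yz_def Ah_def)
  also have "cg \<dots> (\<Sum>k\<in>UU. bv t k * bv s (rf k))"
  proof (rule cg_sum)
    fix k assume k: "k \<in> UU"
    show "cg (bv s k * bv t (rf k)) (bv t k * bv s (rf k))"
      using mn[of s t k "rf k"] assms k U_Zc rfU L_Zc by (simp add: ac_simps)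
  qed
  also have "\<dots> = Y t (rf s)"
    using assms rfZ by (simp add: Y_def Yz_def Ah_def)
  finally show ?thesis .
qed

end


context ctx begin

lemma rf_eq: "rf x = d + 1 - x" by (simp add: rf_def d_eq)

lemma Zset_eq: "Zset d m = ZZ" by (simp add: Zset_def ZZ_def d_eq)
lemma Zc_eq: "Zc d m = ZC" by (simp add: Zc_def Zc_alt Zset_eq)

lemma S0_entry: assumes "i \<in> {1..d}" "t \<in> {1..d}"
  shows "(S0mat d m i t :: 'b::comm_ring_1) = (if t = rf i \<and> i \<in> ZC then 1 else 0)"
  using assms by (auto simp: S0mat_def Zc_eq rf_eq)
lemma S1_entry: assumes "i \<in> {1..d}" "t \<in> {1..d}"
  shows "(S1mat d m i t :: 'b::comm_ring_1) = (if t = rf i \<and> i \<in> ZZ then 1 else 0)"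
  using assms by (auto simp: S1mat_def Zset_eq rf_eq)

lemma rf_range: "x \<in> {1..d} \<Longrightarrow> rf x \<in> {1..d}"
  by (auto simp: rf_eq)

lemma cS0: assumes "i \<in> {1..d}"
  shows "mmul d (S0mat d m) M i j = (if i \<in> ZC then M (rf i) j else (0::'b::comm_ring_1))"
proof -
  have "mmul d (S0mat d m) M i j = (\<Sum>t\<in>{1..d}. if t = rf i then (if i \<in> ZC then M t j else 0) else 0)"
    unfolding mmul_def by (rule sum.cong) (use assms in \<open>auto simp: S0_entry\<close>)
  also have "\<dots> = (if i \<in> ZC then M (rf i) j else 0)"
    using rf_range[OF assms] by (simp add: sum.delta)
  finally show ?thesis .
qed

lemma cS1: assumes "i \<in> {1..d}"
  shows "mmul d (S1mat d m) M i j = (if i \<in> ZZ then M (rf i) j else (0::'b::comm_ring_1))"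
proof -
  have "mmul d (S1mat d m) M i j = (\<Sum>t\<in>{1..d}. if t = rf i then (if i \<in> ZZ then M t j else 0) else 0)"
    unfolding mmul_def by (rule sum.cong) (use assms in \<open>auto simp: S1_entry\<close>)
  also have "\<dots> = (if i \<in> ZZ then M (rf i) j else 0)"
    using rf_range[OF assms] by (simp add: sum.delta)
  finally show ?thesis .
qed

lemma ZC_sub: "ZC \<subseteq> {1..d}" and ZZ_sub: "ZZ \<subseteq> {1..d}"
  using Zc_range Z_range by auto

lemma ctS0: "mmul d (mmul d (mtr M) (S0mat d m)) N i j = (\<Sum>y\<in>ZC. M (rf y) i * (N y j :: 'b::comm_ring_1))"
proof -
  have inner: "mmul d (mtr M) (S0mat d m) i y = (if y \<in> ZC then M (rf y) i else 0)" if y: "y \<in> {1..d}" for y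
  proof -
    have "mmul d (mtr M) (S0mat d m) i y = (\<Sum>x\<in>{1..d}. if x = rf y then (if y \<in> ZC then M x i else 0) else 0)"
      unfolding mmul_def mtr_def
    proof (rule sum.cong[OF refl])
      fix x assume x: "x \<in> {1..d}"
      have "x \<in> ZC \<and> x + y = d + 1 \<longleftrightarrow> x = rf y \<and> y \<in> ZC"
      proof
        assume h: "x \<in> ZC \<and> x + y = d + 1"
        then have "y = rf x" by (auto simp: rf_eq)
        then show "x = rf y \<and> y \<in> ZC" using h rfZc rf_rfZc by auto
      next
        assume h: "x = rf y \<and> y \<in> ZC"
        then show "x \<in> ZC \<and> x + y = d + 1" using rfZc y by (auto simp: rf_eq)
      qed
      then show "M x i * S0mat d m x y = (if x = rf y then (if y \<in> ZC then M x i else 0) else 0)"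
        using x y by (auto simp: S0mat_def Zc_eq)
    qed
    also have "\<dots> = (if y \<in> ZC then M (rf y) i else 0)"
      using rf_range[OF y] by (simp add: sum.delta)
    finally show ?thesis .
  qed
  have "mmul d (mmul d (mtr M) (S0mat d m)) N i j = (\<Sum>y\<in>{1..d}. if y \<in> ZC then M (rf y) i * N y j else 0)"
    unfolding mmul_def[of d "mmul d (mtr M) (S0mat d m)"] by (rule sum.cong) (auto simp: inner)
  also have "\<dots> = (\<Sum>y\<in>ZC. M (rf y) i * N y j)"
    unfolding sum_all_split by (simp add: Zc_notZ Z_notZc cong: sum.cong)
  finally show ?thesis .
qed

lemma ctS1: "mmul d (mmul d (mtr M) (S1mat d m)) N i j = (\<Sum>y\<in>ZZ. M (rf y) i * (N y j :: 'b::comm_ring_1))"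
proof -
  have inner: "mmul d (mtr M) (S1mat d m) i y = (if y \<in> ZZ then M (rf y) i else 0)" if y: "y \<in> {1..d}" for y
  proof -
    have "mmul d (mtr M) (S1mat d m) i y = (\<Sum>x\<in>{1..d}. if x = rf y then (if y \<in> ZZ then M x i else 0) else 0)"
      unfolding mmul_def mtr_def
    proof (rule sum.cong[OF refl])
      fix x assume x: "x \<in> {1..d}"
      have "x \<in> ZZ \<and> x + y = d + 1 \<longleftrightarrow> x = rf y \<and> y \<in> ZZ"
      proof
        assume h: "x \<in> ZZ \<and> x + y = d + 1"
        then have "y = rf x" by (auto simp: rf_eq)
        then show "x = rf y \<and> y \<in> ZZ" using h rfZ rf_rfZ by auto
      next
        assume h: "x = rf y \<and> y \<in> ZZ"
        then show "x \<in> ZZ \<and> x + y = d + 1" using rfZ y by (auto simp: rf_eq)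
      qed
      then show "M x i * S1mat d m x y = (if x = rf y then (if y \<in> ZZ then M x i else 0) else 0)"
        using x y by (auto simp: S1mat_def Zset_eq)
    qed
    also have "\<dots> = (if y \<in> ZZ then M (rf y) i else 0)"
      using rf_range[OF y] by (simp add: sum.delta)
    finally show ?thesis .
  qed
  have "mmul d (mmul d (mtr M) (S1mat d m)) N i j = (\<Sum>y\<in>{1..d}. if y \<in> ZZ then M (rf y) i * N y j else 0)"
    unfolding mmul_def[of d "mmul d (mtr M) (S1mat d m)"] by (rule sum.cong) (auto simp: inner)
  also have "\<dots> = (\<Sum>y\<in>ZZ. M (rf y) i * N y j)"
    unfolding sum_all_split by (simp add: Zc_notZ Z_notZc cong: sum.cong)
  finally show ?thesis .
qed

end

lemma cJr: assumes "b \<in> {1..k}"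
  shows "mmul k M (Jmat k) a b = (M a (k + 1 - b) :: 'b::comm_ring_1)"
proof -
  have "mmul k M (Jmat k) a b = (\<Sum>t\<in>{1..k}. if t = k + 1 - b then M a t else 0)"
    unfolding mmul_def Jmat_def by (rule sum.cong) (use assms in auto)
  also have "\<dots> = M a (k + 1 - b)"
    using assms by (subst sum.delta) auto
  finally show ?thesis .
qed

lemma cJl: assumes "a \<in> {1..k}"
  shows "mmul k (Jmat k) N a b = (N (k + 1 - a) b :: 'b::comm_ring_1)"
proof -
  have "mmul k (Jmat k) N a b = (\<Sum>t\<in>{1..k}. if t = k + 1 - a then N t b else 0)"
    unfolding mmul_def Jmat_def by (rule sum.cong) (use assms in auto)
  also have "\<dots> = N (k + 1 - a) b"
    using assms by (subst sum.delta) auto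
  finally show ?thesis .
qed

context ctx begin

lemma cBB: assumes "a \<in> {1..l}" "b \<in> {1..l}"
  shows "mmul m (mmul m (\<lambda>a c. F (m + a) (m + l + c)) (Jmat m)) (mtr (\<lambda>a c. F (m + a) c)) a b
       = (\<Sum>k\<in>UU. F (m + a) k * (F (m + b) (rf k) :: 'b::comm_ring_1))"
proof -
  have "mmul m (mmul m (\<lambda>a c. F (m + a) (m + l + c)) (Jmat m)) (mtr (\<lambda>a c. F (m + a) c)) a b
      = (\<Sum>c\<in>LL. F (m + a) (rf c) * F (m + b) c)"
    unfolding mmul_def[of m "mmul m _ _"] mtr_def LL_def
  proof (rule sum.cong[OF refl])
    fix x assume x: "x \<in> {1..m}"
    have e: "m + l + (m + 1 - x) = rf x" using x by (auto simp: rf_def)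
    have "mmul m (\<lambda>a c. F (m + a) (m + l + c)) (Jmat m) a x = F (m + a) (m + l + (m + 1 - x))"
      by (rule cJr[OF x])
    also have "\<dots> = F (m + a) (rf x)" by (simp only: e)
    finally show "mmul m (\<lambda>a c. F (m + a) (m + l + c)) (Jmat m) a x * F (m + b) x = F (m + a) (rf x) * F (m + b) x"
      by simp
  qed
  also have "\<dots> = (\<Sum>k\<in>UU. F (m + a) k * F (m + b) (rf k))"
    by (rule sumLU_swap[where f="\<lambda>c c'. F (m + a) c' * F (m + b) c"])
  finally show ?thesis .
qed

end


lemma subst_if: "subst \<sigma> (if c then a else b) = (if c then subst \<sigma> a else subst \<sigma> b)"
  by simp

context ctx begin

lemma Xmat_bv: "Xmat = bv"
  by (intro ext) (simp add: Xmat_def bv_def)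

lemma sumZ_shift: "(\<Sum>a\<in>{1..l}. f (m + a)) = (\<Sum>s\<in>ZZ. f s)"
proof -
  have "(\<Sum>s\<in>ZZ. f s) = (\<Sum>s\<in>{1+m..l+m}. f s)" by (simp add: ZZ_def ac_simps)
  also have "\<dots> = (\<Sum>a\<in>{1..l}. f (a + m))" by (rule sum.shift_bounds_cl_nat_ivl)
  finally show ?thesis by (simp add: ac_simps)
qed

lemma rf_shift: "a \<in> {1..l} \<Longrightarrow> rf (m + a) = m + (l + 1 - a)"
  by (auto simp: rf_def)

lemma shift_ZZ: "a \<in> {1..l} \<Longrightarrow> m + a \<in> ZZ"
  by (auto simp: ZZ_def)

lemma bv_carr: "s \<in> ZZ \<Longrightarrow> k \<in> ZC \<Longrightarrow> bv s k \<in> carrV (ZZ \<times> ZC)"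
  by (simp add: bv_def)

lemma Ah_carr: "s \<in> ZZ \<Longrightarrow> j \<in> ZZ \<Longrightarrow> Ah s j \<in> carrV (ZZ \<times> ZC)"
  unfolding Ah_def by (intro carrV_sum carrV_mult bv_carr) (auto intro: rfZ U_Zc L_Zc rfU)

lemma Yz_carr: "y \<in> ZZ \<Longrightarrow> j \<in> {1..d} \<Longrightarrow> Yz y j \<in> carrV (ZZ \<times> ZC)"
  using all_split by (auto simp: Yz_def intro: Ah_carr bv_carr)

lemma Y_carr: "i \<in> {1..d} \<Longrightarrow> j \<in> {1..d} \<Longrightarrow> Y i j \<in> carrV (ZZ \<times> ZC)"
  using all_split unfolding Y_def
  by (auto simp: HH_def intro!: carrV_sum carrV_mult carrV_uminus Yz_carr bv_carr intro: rfZ rfZc)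

lemma Y_fix: "i \<in> ZZ \<Longrightarrow> j \<in> ZC \<Longrightarrow> Y i j = Var (i, j)"
  using Zc_notZ by (simp add: Y_def Yz_def bv_def)

lemma T_carr: "T \<in> carrV (ZZ \<times> ZC)"
  unfolding T_def by (intro carrV_sum carrV_mult bv_carr) (auto intro: rfZ U_Zc L_Zc rfU)

end

definition sg :: "(nat \<Rightarrow> nat \<Rightarrow> 'a::comm_ring_1 mpoly) \<Rightarrow> nat \<times> nat \<Rightarrow> 'a mpoly" where
  "sg F = (\<lambda>(i, j). F i j)"

lemma subst_Xmat[simp]: "subst (sg F) (Xmat a b) = F a b"
  by (simp add: Xmat_def sg_def)

context ctx2 begin

lemma cg_if: "cg a b \<Longrightarrow> cg (if c then a else 0) (if c then b else 0)"
  by simp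

lemma cg_0I: "cg a b \<Longrightarrow> cg b 0 \<Longrightarrow> a \<in> tideal G"
  using cg_trans cg_0 by blast

lemma A_X2: assumes "i \<in> {1..d}" "j \<in> {1..d}"
  shows "subst (sg Y) (mmul d Xmat Xmat i j) \<in> tideal G"
proof (rule cg_0I)
  show "cg (subst (sg Y) (mmul d Xmat Xmat i j)) (\<Sum>x\<in>{1..d}. Yt i x * Yt x j)"
    unfolding mmul_def subst_sum subst_mult subst_Xmat
    by (intro cg_sum cg_mult Y_Yt) (use assms in auto)
  show "cg (\<Sum>x\<in>{1..d}. Yt i x * Yt x j) 0" by (rule G1[OF assms])
qed

lemma A_minor: assumes "i \<in> {1..d}" "t \<in> {1..d}" "j \<in> {1..d}" "s \<in> {1..d}"
  shows "subst (sg Y) (Xmat i j * Xmat t s - Xmat i s * Xmat t j) \<in> tideal G"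
proof (rule cg_0I)
  show "cg (subst (sg Y) (Xmat i j * Xmat t s - Xmat i s * Xmat t j)) (Yt i j * Yt t s - Yt i s * Yt t j)"
    unfolding subst_diff subst_mult subst_Xmat
    by (intro cg_diff cg_mult Y_Yt) (use assms in auto)
  show "cg (Yt i j * Yt t s - Yt i s * Yt t j) 0"
    using G2[OF assms] unfolding cg_def by simp
qed

lemma A_E1: assumes "i \<in> {1..d}" "j \<in> {1..d}"
  shows "subst (sg Y) (mmul d (mmul d (mtr Xmat) (S0mat d m)) Xmat i j
        - 2 * Const pi * (mmul d (S0mat d m) Xmat i j + Const pi * mmul d (S1mat d m) Xmat i j)) \<in> tideal G"
proof (rule cg_0I)
  have r: "rf i \<in> {1..d}" using rf_range assms by blast
  show "cg (subst (sg Y) (mmul d (mmul d (mtr Xmat) (S0mat d m)) Xmat i j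
        - 2 * Const pi * (mmul d (S0mat d m) Xmat i j + Const pi * mmul d (S1mat d m) Xmat i j)))
     ((\<Sum>y\<in>ZC. Yt (rf y) i * Yt y j)
      - 2 * PP * ((if i \<in> ZC then Yt (rf i) j else 0) + PP * (if i \<in> ZZ then Yt (rf i) j else 0)))"
    unfolding ctS0 cS0[OF assms(1)] cS1[OF assms(1)]
    unfolding subst_diff subst_mult subst_add subst_sum subst_if subst_Xmat subst_Const subst_numeral subst_zero PP_def
    by (intro cg_diff cg_add cg_multl cg_sum cg_mult cg_if Y_Yt cg_refl)
       (use assms r rfZc Zc_range in auto)
  show "cg ((\<Sum>y\<in>ZC. Yt (rf y) i * Yt y j)
      - 2 * PP * ((if i \<in> ZC then Yt (rf i) j else 0) + PP * (if i \<in> ZZ then Yt (rf i) j else 0))) 0"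
    by (rule G3[OF assms])
qed

lemma A_E2: assumes "i \<in> {1..d}" "j \<in> {1..d}"
  shows "subst (sg Y) (mmul d (mmul d (mtr Xmat) (S1mat d m)) Xmat i j
        + 2 * (mmul d (S0mat d m) Xmat i j + Const pi * mmul d (S1mat d m) Xmat i j)) \<in> tideal G"
proof -
  have "subst (sg Y) (mmul d (mmul d (mtr Xmat) (S1mat d m)) Xmat i j
        + 2 * (mmul d (S0mat d m) Xmat i j + Const pi * mmul d (S1mat d m) Xmat i j))
      = (\<Sum>y\<in>ZZ. Y (rf y) i * Y y j)
      + 2 * ((if i \<in> ZC then Y (rf i) j else 0) + PP * (if i \<in> ZZ then Y (rf i) j else 0))"
    unfolding ctS1 cS0[OF assms(1)] cS1[OF assms(1)]
    unfolding subst_mult subst_add subst_sum subst_if subst_Xmat subst_Const subst_numeral subst_zero PP_def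
    by simp
  then show ?thesis using G4[OF assms] cg_0 by simp
qed

end


context ctx begin

lemma B2_eq: "B2blk m l = (\<lambda>a c. Xmat (m + a) (m + l + c))"
  by (intro ext) (simp add: B2blk_def)
lemma B1_eq: "B1blk m = (\<lambda>a c. Xmat (m + a) c)"
  by (intro ext) (simp add: B1blk_def)

lemma BB_conv: assumes "a \<in> {1..l}" "b \<in> {1..l}"
  shows "mmul m (mmul m (B2blk m l) (Jmat m)) (mtr (B1blk m)) a b
       = (\<Sum>k\<in>UU. Xmat (m + a) k * Xmat (m + b) (rf k))"
  unfolding B2_eq B1_eq by (rule cBB[OF assms])

lemma AJ_conv: assumes "a \<in> {1..l}" "b \<in> {1..l}"
  shows "mmul l (Ablk m) (Jmat l) a b = Xmat (m + a) (rf (m + b))"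
  using assms by (simp add: cJr Ablk_def rf_shift)

lemma JA_conv: assumes "a \<in> {1..l}" "b \<in> {1..l}"
  shows "mmul l (Jmat l) (mtr (Ablk m)) a b = Xmat (m + b) (rf (m + a))"
  using assms by (simp add: cJl Ablk_def mtr_def rf_shift)

lemma Ah_BB: assumes "s \<in> ZZ" "t \<in> ZZ"
  shows "Ah s (rf t) = (\<Sum>k\<in>UU. bv s k * bv t (rf k))"
  using assms by (simp add: Ah_def)

abbreviation "GI \<equiv> I_naive_gens d m pi \<union> I_add_gens d m l pi"

lemma in_naive2: "1 \<le> i \<Longrightarrow> i < t \<Longrightarrow> t \<le> d \<Longrightarrow> 1 \<le> j \<Longrightarrow> j < s \<Longrightarrow> s \<le> d \<Longrightarrow>
   Xmat i j * Xmat t s - Xmat i s * Xmat t j \<in> I_naive_gens d m pi"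
  unfolding I_naive_gens_def by (rule UnI1, rule UnI1, rule UnI2) blast

lemma in_naive4: "i \<in> {1..d} \<Longrightarrow> j \<in> {1..d} \<Longrightarrow>
   mmul d (mmul d (mtr Xmat) (S1mat d m)) Xmat i j
        + 2 * (mmul d (S0mat d m) Xmat i j + Const pi * mmul d (S1mat d m) Xmat i j) \<in> I_naive_gens d m pi"
  unfolding I_naive_gens_def by (rule UnI2) blast

lemma in_add2: "(\<Sum>a\<in>{1..l}. Ablk m a a) + 2 * Const pi \<in> I_add_gens d m l pi"
  unfolding I_add_gens_def by (rule UnI1, rule UnI1, rule UnI2) blast

lemma in_add4: "a \<in> {1..l} \<Longrightarrow> b \<in> {1..l} \<Longrightarrow>
   mmul m (mmul m (B2blk m l) (Jmat m)) (mtr (B1blk m)) a b - mmul l (Ablk m) (Jmat l) a b \<in> I_add_gens d m l pi"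
  unfolding I_add_gens_def by (rule UnI2) blast

lemma B_minor: assumes "i \<in> {1..d}" "t \<in> {1..d}" "j \<in> {1..d}" "s \<in> {1..d}"
  shows "Xmat i j * Xmat t s - Xmat i s * Xmat t j \<in> tideal GI"
proof -
  have gen: "Xmat i j * Xmat t s - Xmat i s * Xmat t j \<in> tideal GI"
    if "i \<in> {1..d}" "t \<in> {1..d}" "j \<in> {1..d}" "s \<in> {1..d}" "i < t" "j < s" for i t j s
    by (rule tideal.gen, rule UnI1, rule in_naive2) (use that in auto)
  let ?D = "\<lambda>i t j s. Xmat i j * Xmat t s - Xmat i s * Xmat t j :: 'a mpoly"
  have sw1: "?D i t j s = - ?D i t s j" by (simp add: algebra_simps)
  have sw2: "?D i t j s = - ?D t i j s" by (simp add: algebra_simps)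
  have sw3: "?D i t j s = ?D t i s j" by (simp add: algebra_simps)
  show ?thesis
  proof (cases rule: linorder_cases[of i t])
    case less
    show ?thesis
    proof (cases rule: linorder_cases[of j s])
      case less then show ?thesis using gen assms \<open>i < t\<close> by blast
    next
      case equal then show ?thesis by (simp add: tideal.zero)
    next
      case greater then show ?thesis using gen[of i t s j] assms \<open>i < t\<close> sw1 tideal_uminus by metis
    qed
  next
    case equal then show ?thesis by (simp add: tideal.zero ac_simps)
  next
    case greater
    show ?thesis
    proof (cases rule: linorder_cases[of j s])
      case less then show ?thesis using gen[of t i j s] assms \<open>t < i\<close> sw2 tideal_uminus by metis
    next
      case equal then show ?thesis by (simp add: tideal.zero)
    next
      case greater then show ?thesis using gen[of t i s j] assms \<open>t < i\<close> sw3 by metis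
    qed
  qed
qed

end


context ctx begin

abbreviation "MBB \<equiv> mmul m (mmul m (B2blk m l) (Jmat m)) (mtr (B1blk m))"
abbreviation "gBB a b \<equiv> MBB a b - mmul l (Ablk m) (Jmat l) a b"
abbreviation "Tgen \<equiv> (\<Sum>a\<in>{1..l}. mmul l MBB (Jmat l) a a) + 2 * Const pi"

lemma gBB_in: "a \<in> {1..l} \<Longrightarrow> b \<in> {1..l} \<Longrightarrow> gBB a b \<in> tideal GI"
  by (rule tideal.gen, rule UnI2, rule in_add4)

lemma B_T: "Tgen \<in> tideal GI"
proof -
  have e: "mmul l MBB (Jmat l) a a = gBB a (l + 1 - a) + Ablk m a a" if a: "a \<in> {1..l}" for a
  proof -
    have h1: "mmul l MBB (Jmat l) a a = MBB a (l + 1 - a)" by (rule cJr[OF a])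
    have h2: "mmul l (Ablk m) (Jmat l) a (l + 1 - a) = Ablk m a a"
      using a by (subst cJr) auto
    show ?thesis by (simp only: h1 h2 diff_add_cancel)
  qed
  have "Tgen = (\<Sum>a\<in>{1..l}. gBB a (l + 1 - a)) + ((\<Sum>a\<in>{1..l}. Ablk m a a) + 2 * Const pi)"
  proof -
    have "(\<Sum>a\<in>{1..l}. mmul l MBB (Jmat l) a a) = (\<Sum>a\<in>{1..l}. gBB a (l + 1 - a) + Ablk m a a)"
      by (rule sum.cong[OF refl]) (rule e)
    also have "\<dots> = (\<Sum>a\<in>{1..l}. gBB a (l + 1 - a)) + (\<Sum>a\<in>{1..l}. Ablk m a a)"
      by (rule sum.distrib)
    finally show ?thesis by (simp add: add.assoc)
  qed
  also have "\<dots> \<in> tideal GI"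
    by (intro tideal.add tideal_sum gBB_in tideal.gen UnI2 in_add2) auto
  finally show ?thesis .
qed

lemma Tgen_eq: "Tgen = T + 2 * PP"
proof -
  have "(\<Sum>a\<in>{1..l}. mmul l MBB (Jmat l) a a) = (\<Sum>a\<in>{1..l}. \<Sum>k\<in>UU. bv (m + a) k * bv (rf (m + a)) (rf k))"
  proof (rule sum.cong[OF refl])
    fix a assume a: "a \<in> {1..l}"
    have b: "l + 1 - a \<in> {1..l}" using a by auto
    have "mmul l MBB (Jmat l) a a = MBB a (l + 1 - a)" by (rule cJr[OF a])
    also have "\<dots> = (\<Sum>k\<in>UU. Xmat (m + a) k * Xmat (m + (l + 1 - a)) (rf k))"
      by (rule BB_conv[OF a b])
    also have "\<dots> = (\<Sum>k\<in>UU. bv (m + a) k * bv (rf (m + a)) (rf k))"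
      by (simp add: Xmat_def bv_def rf_shift[OF a])
    finally show "mmul l MBB (Jmat l) a a = (\<Sum>k\<in>UU. bv (m + a) k * bv (rf (m + a)) (rf k))" .
  qed
  also have "\<dots> = T" unfolding T_def by (rule sumZ_shift[where f="\<lambda>s. \<Sum>k\<in>UU. bv s k * bv (rf s) (rf k)"])
  finally show ?thesis by (simp add: PP_def)
qed

lemma C_ZZ: assumes "i \<in> ZZ" "j \<in> ZZ" shows "Var (i, j) - Ah i j \<in> tideal GI"
proof -
  define a where "a = i - m"
  define b where "b = rf j - m"
  have a: "a \<in> {1..l}" and ia: "i = m + a" using assms by (auto simp: a_def ZZ_def)
  have rj: "rf j \<in> ZZ" using rfZ assms by blast
  have b: "b \<in> {1..l}" and jb: "rf j = m + b" using rj by (auto simp: b_def ZZ_def)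
  have "gBB a b = (\<Sum>k\<in>UU. Xmat (m + a) k * Xmat (m + b) (rf k)) - Xmat (m + a) (rf (m + b))"
    by (simp add: BB_conv[OF a b] AJ_conv[OF a b])
  also have "\<dots> = Ah i j - Var (i, j)"
    using assms by (simp add: Ah_def Xmat_bv bv_def ia[symmetric] jb[symmetric])
  finally have "Ah i j - Var (i, j) \<in> tideal GI" using gBB_in[OF a b] by simp
  from tideal_uminus[OF this] show ?thesis by simp
qed

lemma C_all: assumes "i \<in> {1..d}" "j \<in> {1..d}" shows "Var (i, j) - Y i j \<in> tideal GI"
proof (cases "i \<in> ZZ")
  case True
  then show ?thesis
  proof (cases "j \<in> ZZ")
    case True then show ?thesis using C_ZZ \<open>i \<in> ZZ\<close> by (simp add: Y_def Yz_def)
  next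
    case False then show ?thesis using \<open>i \<in> ZZ\<close> by (simp add: Y_def Yz_def bv_def tideal.zero)
  qed
next
  case False
  then have i: "i \<in> ZC" using assms all_split by blast
  have ri: "rf i \<in> {1..d}" "rf i \<in> ZC" using rf_range assms rfZc i by auto
  define E where "E = mmul d (mmul d (mtr Xmat) (S1mat d m)) Xmat (rf i) j
        + 2 * (mmul d (S0mat d m) Xmat (rf i) j + Const pi * mmul d (S1mat d m) Xmat (rf i) j)"
  have E_in: "E \<in> tideal GI"
    unfolding E_def by (rule tideal.gen, rule UnI1, rule in_naive4) (use ri assms in auto)
  have E_eq: "E = (\<Sum>y\<in>ZZ. bv (rf y) (rf i) * bv y j) + 2 * bv i j"
    unfolding E_def ctS1 cS0[OF ri(1)] cS1[OF ri(1)] using ri i Zc_notZ by (simp add: Xmat_bv)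
  have D: "Yz y j - bv y j \<in> tideal GI" if y: "y \<in> ZZ" for y
  proof (cases "j \<in> ZZ")
    case True
    have "Yz y j - bv y j = - (Var (y, j) - Ah y j)" using True by (simp add: Yz_def bv_def)
    then show ?thesis using tideal_uminus[OF C_ZZ[OF y True]] by simp
  next
    case False then show ?thesis by (simp add: Yz_def tideal.zero)
  qed
  have "Var (i, j) - Y i j = HH * E + HH * (\<Sum>y\<in>ZZ. bv (rf y) (rf i) * (Yz y j - bv y j))"
  proof -
    have "Var (i, j) - Y i j = bv i j + HH * (\<Sum>y\<in>ZZ. bv (rf y) (rf i) * Yz y j)"
      using False by (simp add: Y_def bv_def)
    moreover have "HH * E = HH * (\<Sum>y\<in>ZZ. bv (rf y) (rf i) * bv y j) + bv i j"
      using H2 by (simp add: E_eq algebra_simps flip: mult.assoc)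
    moreover have "HH * (\<Sum>y\<in>ZZ. bv (rf y) (rf i) * (Yz y j - bv y j))
        = HH * (\<Sum>y\<in>ZZ. bv (rf y) (rf i) * Yz y j) - HH * (\<Sum>y\<in>ZZ. bv (rf y) (rf i) * bv y j)"
      by (simp add: algebra_simps sum_subtractf)
    ultimately show ?thesis by simp
  qed
  also have "\<dots> \<in> tideal GI"
    by (intro tideal.add tideal.mul tideal_sum E_in D)
  finally show ?thesis .
qed

end

context ctx2 begin

lemma A_trX: "subst (sg Y) (\<Sum>i\<in>{1..d}. Xmat i i) \<in> tideal G"
  using G5a by (simp add: subst_sum cg_0)

lemma A_trA: "subst (sg Y) ((\<Sum>a\<in>{1..l}. Ablk m a a) + 2 * Const pi) \<in> tideal G"
proof -
  have "subst (sg Y) ((\<Sum>a\<in>{1..l}. Ablk m a a) + 2 * Const pi) = (\<Sum>s\<in>ZZ. Y s s) + 2 * PP"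
    by (simp only: subst_add subst_sum subst_mult Ablk_def subst_Xmat subst_numeral subst_Const PP_def sumZ_shift[where f="\<lambda>s. Y s s"])
  then show ?thesis using G5b by (simp add: cg_0)
qed

lemma A_AJ: assumes "a \<in> {1..l}" "b \<in> {1..l}"
  shows "subst (sg Y) (mmul l (Ablk m) (Jmat l) a b - mmul l (Jmat l) (mtr (Ablk m)) a b) \<in> tideal G"
proof -
  have "subst (sg Y) (mmul l (Ablk m) (Jmat l) a b - mmul l (Jmat l) (mtr (Ablk m)) a b)
      = Y (m + a) (rf (m + b)) - Y (m + b) (rf (m + a))"
    by (simp add: AJ_conv[OF assms] JA_conv[OF assms] subst_diff)
  then show ?thesis using G5c[OF shift_ZZ[OF assms(1)] shift_ZZ[OF assms(2)]] by (simp add: cg_def)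
qed

lemma A_BB: assumes "a \<in> {1..l}" "b \<in> {1..l}"
  shows "subst (sg Y) (gBB a b) \<in> tideal G"
proof -
  have s: "m + a \<in> ZZ" "m + b \<in> ZZ" using shift_ZZ assms by auto
  have r: "rf (m + b) \<in> ZZ" using rfZ s by blast
  have "subst (sg Y) (gBB a b) = (\<Sum>k\<in>UU. Y (m + a) k * Y (m + b) (rf k)) - Y (m + a) (rf (m + b))"
    by (simp add: BB_conv[OF assms] AJ_conv[OF assms] subst_diff subst_sum subst_mult)
  also have "(\<Sum>k\<in>UU. Y (m + a) k * Y (m + b) (rf k)) = (\<Sum>k\<in>UU. bv (m + a) k * bv (m + b) (rf k))"
    by (rule sum.cong[OF refl]) (use s U_Zc rfU L_Zc in \<open>auto simp: Y_fix bv_def\<close>)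
  also have "Y (m + a) (rf (m + b)) = (\<Sum>k\<in>UU. bv (m + a) k * bv (m + b) (rf k))"
    using s r by (simp add: Y_def Yz_def Ah_def)
  finally show ?thesis by (simp add: tideal.zero)
qed

lemma A_all: assumes "g \<in> GI" shows "subst (sg Y) g \<in> tideal G"
  using assms unfolding I_naive_gens_def I_add_gens_def
  by (elim UnE CollectE exE conjE)
     (simp_all only: A_X2 A_minor A_E1 A_E2 A_trX A_trA A_AJ A_BB atLeastAtMost_iff singleton_iff,
      auto intro: A_X2 A_minor A_E1 A_E2 A_trX A_trA A_AJ A_BB)

end


lemma two_unit:
  fixes \<pi>\<^sub>O :: "'a::idom"
  assumes "breve_O_like p \<pi>\<^sub>O"
  shows "\<exists>hf::'a. 2 * hf = 1"
proof -
  from assms have pr: "odd p" and ch: "CHAR('a) = 0" and nu: "\<not> \<pi>\<^sub>O dvd 1"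
    and fac: "\<And>x::'a. x \<noteq> 0 \<Longrightarrow> \<exists>u k. u dvd 1 \<and> x = u * \<pi>\<^sub>O ^ k"
    and pd: "\<pi>\<^sub>O dvd of_nat p"
    unfolding breve_O_like_def by blast+
  have "(2::'a) \<noteq> 0"
    using ch CHAR_eq0_iff[where 'a='a] by (metis of_nat_numeral zero_less_numeral)
  then obtain u k where u: "u dvd 1" and e: "(2::'a) = u * \<pi>\<^sub>O ^ k" using fac by blast
  show ?thesis
  proof (cases k)
    case 0
    then have "(2::'a) dvd 1" using e u by simp
    then show ?thesis by (auto simp: dvd_def mult.commute)
  next
    case (Suc k')
    then have d2: "\<pi>\<^sub>O dvd 2" using e by (simp add: dvd_def) (metis mult.left_commute)
    obtain q where q: "p = 2 * q + 1" using pr oddE by blast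
    have "\<pi>\<^sub>O dvd 2 * of_nat q" using d2 by simp
    moreover have "(of_nat p :: 'a) = 2 * of_nat q + 1" using q by simp
    ultimately have "\<pi>\<^sub>O dvd 1" using pd by (metis dvd_add_right_iff)
    with nu show ?thesis by blast
  qed
qed

context ctx begin

lemma Xmat_carrV'[simp, intro]: "(i, j) \<in> V \<Longrightarrow> Xmat i j \<in> carrV V"
  by (simp add: Xmat_def)

lemma if_carrV: "a \<in> carrV V \<Longrightarrow> (if c then a else 0) \<in> carrV V"
  by simp

lemma GI_carr: "GI \<subseteq> carrV ({1..d} \<times> {1..d})"
proof
  fix g assume g: "g \<in> GI"
  let ?V = "{1..d} \<times> {1..d}"
  have rng: "\<And>y. y \<in> ZC \<Longrightarrow> Suc 0 \<le> rf y" "\<And>y. y \<in> ZC \<Longrightarrow> rf y \<le> d"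
    "\<And>y. y \<in> ZZ \<Longrightarrow> Suc 0 \<le> rf y" "\<And>y. y \<in> ZZ \<Longrightarrow> rf y \<le> d"
    "\<And>y. y \<in> ZC \<Longrightarrow> Suc 0 \<le> y" "\<And>y. y \<in> ZC \<Longrightarrow> y \<le> d"
    "\<And>y. y \<in> ZZ \<Longrightarrow> Suc 0 \<le> y" "\<And>y. y \<in> ZZ \<Longrightarrow> y \<le> d"
    "\<And>y. y \<in> UU \<Longrightarrow> Suc 0 \<le> y" "\<And>y. y \<in> UU \<Longrightarrow> y \<le> d"
    "\<And>y. y \<in> UU \<Longrightarrow> Suc 0 \<le> rf y" "\<And>y. y \<in> UU \<Longrightarrow> rf y \<le> d"
    "\<And>a. Suc 0 \<le> a \<Longrightarrow> a \<le> l \<Longrightarrow> Suc 0 \<le> rf (m + a)"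
    "\<And>a. Suc 0 \<le> a \<Longrightarrow> a \<le> l \<Longrightarrow> rf (m + a) \<le> d"
    "\<And>a. a \<le> l \<Longrightarrow> m + a \<le> d"
    using rf_range Zc_range Z_range U_Zc by (auto simp: rf_def d_eq)
  from g show "g \<in> carrV ?V"
    unfolding I_naive_gens_def I_add_gens_def
  proof (elim UnE CollectE exE conjE)
    fix i j assume "g = mmul d Xmat Xmat i j" "i \<in> {1..d}" "j \<in> {1..d}"
    then show ?thesis unfolding mmul_def by (auto intro!: carrV_sum carrV_mult simp: Xmat_def)
  next
    fix i t j s assume "g = Xmat i j * Xmat t s - Xmat i s * Xmat t j"
      "1 \<le> i" "i < t" "t \<le> d" "1 \<le> j" "j < s" "s \<le> d"
    then show ?thesis by (auto intro!: carrV_diff carrV_mult)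
  next
    fix i j assume h: "g = mmul d (mmul d (mtr Xmat) (S0mat d m)) Xmat i j
        - 2 * Const pi * (mmul d (S0mat d m) Xmat i j + Const pi * mmul d (S1mat d m) Xmat i j)"
      "i \<in> {1..d}" "j \<in> {1..d}"
    then show ?thesis unfolding ctS0 cS0[OF h(2)] cS1[OF h(2)]
      by (auto intro!: carrV_diff carrV_mult carrV_add carrV_sum if_carrV simp: rng)
  next
    fix i j assume h: "g = mmul d (mmul d (mtr Xmat) (S1mat d m)) Xmat i j
        + 2 * (mmul d (S0mat d m) Xmat i j + Const pi * mmul d (S1mat d m) Xmat i j)"
      "i \<in> {1..d}" "j \<in> {1..d}"
    then show ?thesis unfolding ctS1 cS0[OF h(2)] cS1[OF h(2)]
      by (auto intro!: carrV_mult carrV_add carrV_sum if_carrV simp: rng)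
  next
    assume "g \<in> {(\<Sum>i\<in>{1..d}. Xmat i i)}"
    then show ?thesis by (auto intro!: carrV_sum)
  next
    assume "g \<in> {(\<Sum>a\<in>{1..l}. Ablk m a a) + 2 * Const pi}"
    then show ?thesis unfolding Ablk_def by (auto intro!: carrV_add carrV_mult carrV_sum simp: rng)
  next
    fix a b assume h: "g = mmul l (Ablk m) (Jmat l) a b - mmul l (Jmat l) (mtr (Ablk m)) a b"
      "a \<in> {1..l}" "b \<in> {1..l}"
    then show ?thesis unfolding AJ_conv[OF h(2,3)] JA_conv[OF h(2,3)]
      by (auto intro!: carrV_diff simp: rng)
  next
    fix a b assume h: "g = MBB a b - mmul l (Ablk m) (Jmat l) a b" "a \<in> {1..l}" "b \<in> {1..l}"
    then show ?thesis unfolding AJ_conv[OF h(2,3)] BB_conv[OF h(2,3)]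
      by (auto intro!: carrV_diff carrV_sum carrV_mult simp: rng)
  qed
qed

lemma Gdd_carr: "I_dd_gens d m l pi \<subseteq> carrV (Zset d m \<times> Zc d m)"
proof
  fix g assume "g \<in> I_dd_gens d m l pi"
  then show "g \<in> carrV (Zset d m \<times> Zc d m)"
    unfolding I_dd_gens_def
  proof (elim UnE CollectE exE conjE)
    fix i t j s assume "g = Xmat i j * Xmat t s - Xmat i s * Xmat t j"
      "i \<in> Zset d m" "t \<in> Zset d m" "j \<in> Zc d m" "s \<in> Zc d m"
    then show ?thesis by (auto simp: Xmat_def)
  next
    assume "g \<in> {Tgen}"
    then have "g = Tgen" by simp
    then show ?thesis using T_carr by (simp only: Tgen_eq Zset_eq Zc_eq) (simp add: PP_def)
  qed
qed

end

theorem theorem1p2: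
  fixes p :: nat and \<pi>\<^sub>O :: "'a::idom" and d l n r :: nat
  assumes "breve_O_like p \<pi>\<^sub>O"
    and "d \<ge> 5" and "2 \<le> l" and "l \<le> d - 2" and "d mod 2 = l mod 2"
    and "n = d div 2" and "r = l div 2"
  shows "\<exists>h. O_alg_iso
     (poly_ring ({1..d} \<times> {1..d}))
     (Idl\<^bsub>poly_ring ({1..d} \<times> {1..d})\<^esub> (I_naive_gens d (n - r) \<pi>\<^sub>O \<union> I_add_gens d (n - r) l \<pi>\<^sub>O))
     (poly_ring (Zset d (n - r) \<times> Zc d (n - r)))
     (Idl\<^bsub>poly_ring (Zset d (n - r) \<times> Zc d (n - r))\<^esub> (I_dd_gens d (n - r) l \<pi>\<^sub>O))
     h"
proof -
  obtain hf :: 'a where hf: "2 * hf = 1" using two_unit[OF assms(1)] by blast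
  have e1: "d = 2 * n + d mod 2" "l = 2 * r + l mod 2" using assms(6,7) by auto
  have dl: "d = l + 2 * (n - r)" and m1: "1 \<le> n - r" and l1: "1 \<le> l"
    using e1 assms(2-5) by linarith+
  interpret C: ctx d "n - r" l \<pi>\<^sub>O hf "I_dd_gens d (n - r) l \<pi>\<^sub>O"
    by unfold_locales (use dl m1 l1 hf in auto)
  interpret C2: ctx2 d "n - r" l \<pi>\<^sub>O hf "I_dd_gens d (n - r) l \<pi>\<^sub>O"
  proof unfold_locales
    fix s t x y assume h: "s \<in> C.ZZ" "t \<in> C.ZZ" "x \<in> C.ZC" "y \<in> C.ZC"
    have "Xmat s x * Xmat t y - Xmat s y * Xmat t x \<in> I_dd_gens d (n - r) l \<pi>\<^sub>O"
      unfolding I_dd_gens_def using h by (intro UnI1) (auto simp: C.Zset_eq C.Zc_eq)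
    then show "C.cg (C.bv s x * C.bv t y) (C.bv s y * C.bv t x)"
      unfolding C.cg_def C.Xmat_bv by (rule tideal.gen)
  next
    have "C.Tgen \<in> I_dd_gens d (n - r) l \<pi>\<^sub>O" unfolding I_dd_gens_def by blast
    then show "C.cg C.T (- (2 * C.PP))"
      unfolding C.cg_def C.Tgen_eq by (simp add: tideal.gen)
  qed
  show ?thesis
  proof (rule main_iso[where \<sigma>="sg C.Y"])
    show "Zset d (n - r) \<times> Zc d (n - r) \<subseteq> {1..d} \<times> {1..d}"
      using C.Z_range C.Zc_range by (auto simp: C.Zset_eq C.Zc_eq)
    show "C.GI \<subseteq> carrV ({1..d} \<times> {1..d})" by (rule C.GI_carr)
    show "I_dd_gens d (n - r) l \<pi>\<^sub>O \<subseteq> carrV (Zset d (n - r) \<times> Zc d (n - r))" by (rule C.Gdd_carr)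
    show "sg C.Y v \<in> carrV (Zset d (n - r) \<times> Zc d (n - r))" if "v \<in> {1..d} \<times> {1..d}" for v
      using that C.Y_carr by (auto simp: sg_def C.Zset_eq C.Zc_eq)
    show "sg C.Y v = Var v" if "v \<in> Zset d (n - r) \<times> Zc d (n - r)" for v
      using that C.Y_fix by (auto simp: sg_def C.Zset_eq C.Zc_eq)
    show "subst (sg C.Y) g \<in> tideal (I_dd_gens d (n - r) l \<pi>\<^sub>O)" if "g \<in> C.GI" for g
      by (rule C2.A_all[OF that])
    show "g \<in> tideal C.GI" if "g \<in> I_dd_gens d (n - r) l \<pi>\<^sub>O" for g
      using that unfolding I_dd_gens_def
    proof (elim UnE CollectE exE conjE)
      fix i t j s assume h: "g = Xmat i j * Xmat t s - Xmat i s * Xmat t j"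
        "i \<in> Zset d (n - r)" "t \<in> Zset d (n - r)" "j \<in> Zc d (n - r)" "s \<in> Zc d (n - r)"
      then show ?thesis using C.B_minor C.Z_range C.Zc_range by (auto simp: C.Zset_eq C.Zc_eq)
    next
      assume "g \<in> {C.Tgen}" then show ?thesis using C.B_T by simp
    qed
    show "Var v - sg C.Y v \<in> tideal C.GI" if "v \<in> {1..d} \<times> {1..d}" for v
      using that C.C_all by (auto simp: sg_def)
  qed
qed


end
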